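(* Assume $\alpha\in[0,1)$. Then, almost surely, $$\lim_{n\to\infty}\mathbb{E}\big[(X_{n+1}-\mathbb{E}[X_{n+1}\mid\mathcal F_n])^2\,\big|\,\mathcal F_n\big]=\phi .$$ Moreover, if $0\le\alpha\le1/2$, then the predictable quadratic variation $\langle M\rangle_n=\sum_{k=1}^n\mathbb{E}[(\Delta M_k)^2\mid\mathcal F_{k-1}]$ of the martingale $M_n=\frac{S_n-\mathbb{E}[S_n]}{a_n}$ (with $M_0=0$, $\mathcal F_0$ trivial, $\Delta M_k=M_k-M_{k-1}$) satisfies $\lim_{n\to\infty}\frac{\langle M\rangle_n}{v_n}=\phi$ almost surely, where $v_n=\sum_{k=1}^n a_k^{-2}$.
   Context: Fix $p,q,r\ge 0$ with $p+q+r=1$ and $\theta\in[0,1)$. Let $(X_n)_{n\ge1}$ be random variables with values in $\{-1,0,+1\}$ such that $\mathbb{P}(X_1=+1)=p$, $\mathbb{P}(X_1=-1)=q$, $\mathbb{P}(X_1=0)=r$. Let $\mathcal F_n=\sigma(X_1,\dots,X_n)$. For $n\ge1$ let $n_+,n_-,n_0$ denote the number of indices $i\in\{1,\dots,n\}$ with $X_i=+1$, $X_i=-1$, $X_i=0$ respectively. The conditional law of $X_{n+1}$ is $\mathbb{P}(X_{n+1}=+1\mid\mathcal F_n)=\theta\big(\tfrac{n_+}{n}p+\tfrac{n_-}{n}q\big)+(1-\theta)p$, $\mathbb{P}(X_{n+1}=-1\mid\mathcal F_n)=\theta\big(\tfrac{n_-}{n}p+\tfrac{n_+}{n}q\big)+(1-\theta)q$,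 $\mathbb{P}(X_{n+1}=0\mid\mathcal F_n)=\theta(p+q)\tfrac{n_0}{n}+r$. Set $S_0=0$, $S_n=\sum_{i=1}^n X_i$. Notation: $\alpha=(p-q)\theta$, $\omega=(p-q)(1-\theta)$, $\tau=(1-\theta)(p+q)$, $\gamma=(p+q)\theta$, $\phi=\frac{\tau}{1-\gamma}-\left(\frac{\omega}{1-\alpha}\right)^2$. Let $a_1=1$ and $a_n=\prod_{k=1}^{n-1}\left(1+\frac{\alpha}{k}\right)$ for $n\ge2$. *)

theory Defs
  imports "HOL-Probability.Probability"
begin

definition nat_filt :: "'a measure \<Rightarrow> (nat \<Rightarrow> 'a \<Rightarrow> real) \<Rightarrow> nat \<Rightarrow> 'a measure" where
  "nat_filt M X n = sigma (space M) (\<Union>i\<in>{1..n}. {X i -` A \<inter> space M | A. A \<in> sets borel})"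

definition cnt :: "(nat \<Rightarrow> 'a \<Rightarrow> real) \<Rightarrow> real \<Rightarrow> nat \<Rightarrow> 'a \<Rightarrow> nat" where
  "cnt X c n \<omega> = card {i\<in>{1..n}. X i \<omega> = c}"

definition partial_sum :: "(nat \<Rightarrow> 'a \<Rightarrow> real) \<Rightarrow> nat \<Rightarrow> 'a \<Rightarrow> real" where
  "partial_sum X n \<omega> = (\<Sum>i\<in>{1..n}. X i \<omega>)"

definition a_seq :: "real \<Rightarrow> nat \<Rightarrow> real" where
  "a_seq \<alpha> n = (\<Prod>k\<in>{1..<n}. 1 + \<alpha> / real k)"

definition mart :: "'a measure \<Rightarrow> (nat \<Rightarrow> 'a \<Rightarrow> real) \<Rightarrow> real \<Rightarrow> nat \<Rightarrow> 'a \<Rightarrow> real" where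
  "mart M X \<alpha> n \<omega> = (if n = 0 then 0
     else (partial_sum X n \<omega> - (\<integral>\<omega>'. partial_sum X n \<omega>' \<partial>M)) / a_seq \<alpha> n)"

definition qvar :: "'a measure \<Rightarrow> (nat \<Rightarrow> 'a \<Rightarrow> real) \<Rightarrow> real \<Rightarrow> nat \<Rightarrow> 'a \<Rightarrow> real" where
  "qvar M X \<alpha> n \<omega> = (\<Sum>k\<in>{1..n}. real_cond_exp M (nat_filt M X (k - 1))
       (\<lambda>\<omega>'. (mart M X \<alpha> k \<omega>' - mart M X \<alpha> (k - 1) \<omega>')^2) \<omega>)"

end

theory Submission
  imports Defs
begin

lemma pw: "(a + d)^4 \<le> a^4 + 4 * (a^3 * d) + (40 * a^2 + 32)" if "\<bar>d\<bar> \<le> 2" for a d :: real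
    proof -
      have e: "(a+d)^4 = a^4 + 4*(a^3*d) + (6*(a^2*d^2) + 4*(a*d^3) + d^2*d^2)"
        by (simp add: numeral_eq_Suc algebra_simps)
      have "\<bar>d\<bar>^2 \<le> 2^2" by (rule power_mono) (use that in auto)
      then have d2: "d^2 \<le> 4" by simp
      have "\<bar>d\<bar>^3 \<le> 2^3" by (rule power_mono) (use that in auto)
      then have "\<bar>a\<bar> * \<bar>d\<bar>^3 \<le> \<bar>a\<bar> * 8" by (intro mult_left_mono) auto
      then have t: "a*d^3 \<le> \<bar>a\<bar> * 8" by (metis abs_ge_self abs_mult order.trans power_abs)
      have "0 \<le> (\<bar>a\<bar> - 1)^2" by simp
      then have q: "\<bar>a\<bar> * 8 \<le> a^2 * 4 + 4" by (simp add: power2_eq_square algebra_simps)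
      have d4: "d^2 * d^2 \<le> 4 * 4" using d2 by (intro mult_mono) auto
      have ad: "a^2*d^2 \<le> a^2 * 4" using d2 by (simp add: mult_left_mono)
      show ?thesis unfolding e using t q d4 ad by linarith
    qed

lemma slln_bounded:
  fixes D :: "nat \<Rightarrow> 'a \<Rightarrow> real"
  assumes P: "prob_space M"
  and meas: "\<And>k. D k \<in> borel_measurable M"
  and bnd: "\<And>k \<omega>. \<omega> \<in> space M \<Longrightarrow> \<bar>D k \<omega>\<bar> \<le> 2"
  and orth1: "\<And>n. (\<integral>\<omega>. (\<Sum>k<n. D k \<omega>) * D n \<omega> \<partial>M) = 0"
  and orth3: "\<And>n. (\<integral>\<omega>. (\<Sum>k<n. D k \<omega>)^3 * D n \<omega> \<partial>M) = 0"
  shows "AE \<omega> in M. (\<lambda>n. (\<Sum>k<n. D k \<omega>) / real n) \<longlonglongrightarrow> 0"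
proof -
  interpret prob_space M by (rule P)
  define T where "T n \<omega> = (\<Sum>k<n. D k \<omega>)" for n \<omega>
  have Tm[measurable]: "T n \<in> borel_measurable M" for n unfolding T_def using meas by measurable
  have Tb: "\<bar>T n \<omega>\<bar> \<le> 2 * real n" if "\<omega> \<in> space M" for n \<omega>
  proof -
    have "\<bar>T n \<omega>\<bar> \<le> (\<Sum>k<n. \<bar>D k \<omega>\<bar>)" unfolding T_def by (rule sum_abs)
    also have "\<dots> \<le> (\<Sum>k<n. 2)" by (rule sum_mono) (use bnd that in auto)
    finally show ?thesis by simp
  qed
  have intb: "integrable M f" if "f \<in> borel_measurable M" "\<And>\<omega>. \<omega> \<in> space M \<Longrightarrow> \<bar>f \<omega>\<bar> \<le> B" for f and B :: real
    by (rule integrable_const_bound[where B=B]) (use that in auto)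
  have intT: "integrable M (\<lambda>\<omega>. T n \<omega> ^ j * D n \<omega> ^ i)" for n i j
  proof (rule intb[of _ "(2*real n)^j * 2^i"])
    show "(\<lambda>\<omega>. T n \<omega> ^ j * D n \<omega> ^ i) \<in> borel_measurable M" using meas by measurable
    fix \<omega> assume w: "\<omega> \<in> space M"
    have "\<bar>T n \<omega> ^ j * D n \<omega> ^ i\<bar> = \<bar>T n \<omega>\<bar> ^ j * \<bar>D n \<omega>\<bar> ^ i" by (simp add: abs_mult power_abs)
    also have "\<dots> \<le> (2*real n)^j * 2^i"
      by (intro mult_mono power_mono Tb bnd w) auto
    finally show "\<bar>T n \<omega> ^ j * D n \<omega> ^ i\<bar> \<le> (2*real n)^j * 2^i" .
  qed
  have intT': "integrable M (\<lambda>\<omega>. T n \<omega> ^ j)" for n j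
    using intT[of n j 0] by simp
  have intD: "integrable M (\<lambda>\<omega>. D n \<omega> ^ i)" for n i
    using intT[of n 0 i] by simp
  have TS: "T (Suc n) \<omega> = T n \<omega> + D n \<omega>" for n \<omega> unfolding T_def by simp
  have E2: "(\<integral>\<omega>. T n \<omega> ^ 2 \<partial>M) \<le> 4 * real n" for n
  proof (induction n)
    case 0 then show ?case by (simp add: T_def)
  next
    case (Suc n)
    have "(\<integral>\<omega>. T (Suc n) \<omega> ^ 2 \<partial>M) = (\<integral>\<omega>. T n \<omega> ^ 2 + 2 * (T n \<omega> ^ 1 * D n \<omega> ^ 1) + D n \<omega> ^ 2 \<partial>M)"
      by (simp add: TS power2_eq_square algebra_simps)
    also have "\<dots> = (\<integral>\<omega>. T n \<omega> ^ 2 \<partial>M) + 2 * (\<integral>\<omega>. T n \<omega> ^ 1 * D n \<omega> ^ 1 \<partial>M) + (\<integral>\<omega>. D n \<omega> ^ 2 \<partial>M)"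
      using intT[of n 1 1] intT'[of n 2] intD[of n 2] by simp
    also have "(\<integral>\<omega>. T n \<omega> ^ 1 * D n \<omega> ^ 1 \<partial>M) = 0" using orth1[of n] by (simp add: T_def)
    also have "(\<integral>\<omega>. D n \<omega> ^ 2 \<partial>M) \<le> (\<integral>\<omega>. 4 \<partial>M)"
    proof (rule integral_mono)
      show "integrable M (\<lambda>\<omega>. D n \<omega> ^ 2)" by (rule intD)
      fix \<omega> assume "\<omega> \<in> space M"
      then have "\<bar>D n \<omega>\<bar> \<le> 2" by (rule bnd)
      then have "\<bar>D n \<omega>\<bar>^2 \<le> 2^2" by (intro power_mono) auto
      then show "D n \<omega> ^ 2 \<le> 4" by simp
    qed auto
    finally show ?case using Suc by (simp add: prob_space)
  qed
  have E4: "(\<integral>\<omega>. T n \<omega> ^ 4 \<partial>M) \<le> 200 * real n ^ 2" for n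
  proof (induction n)
    case 0 then show ?case by (simp add: T_def)
  next
    case (Suc n)
    have "(\<integral>\<omega>. T (Suc n) \<omega> ^ 4 \<partial>M) \<le> (\<integral>\<omega>. T n \<omega> ^ 4 + 4 * (T n \<omega> ^ 3 * D n \<omega> ^ 1) + (40 * T n \<omega> ^ 2 + 32) \<partial>M)"
    proof (rule integral_mono)
      show "integrable M (\<lambda>\<omega>. T (Suc n) \<omega> ^ 4)" by (rule intT')
      show "integrable M (\<lambda>\<omega>. T n \<omega> ^ 4 + 4 * (T n \<omega> ^ 3 * D n \<omega> ^ 1) + (40 * T n \<omega> ^ 2 + 32))"
        using intT[of n 3 1] intT'[of n 4] intT'[of n 2] by simp
      fix \<omega> assume "\<omega> \<in> space M"
      then show "T (Suc n) \<omega> ^ 4 \<le> T n \<omega> ^ 4 + 4 * (T n \<omega> ^ 3 * D n \<omega> ^ 1) + (40 * T n \<omega> ^ 2 + 32)"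
        using pw[of "D n \<omega>" "T n \<omega>"] bnd by (simp add: TS)
    qed
    also have "\<dots> = (\<integral>\<omega>. T n \<omega> ^ 4 \<partial>M) + 4 * (\<integral>\<omega>. T n \<omega> ^ 3 * D n \<omega> ^ 1 \<partial>M) + (40 * (\<integral>\<omega>. T n \<omega> ^ 2 \<partial>M) + 32)"
      using intT[of n 3 1] intT'[of n 4] intT'[of n 2] by (simp add: prob_space)
    also have "(\<integral>\<omega>. T n \<omega> ^ 3 * D n \<omega> ^ 1 \<partial>M) = 0" using orth3[of n] by (simp add: T_def)
    finally have "(\<integral>\<omega>. T (Suc n) \<omega> ^ 4 \<partial>M) \<le> 200 * real n ^ 2 + 40 * (4 * real n) + 32"
      using Suc E2[of n] by linarith
    also have "\<dots> \<le> 200 * real (Suc n) ^ 2" by (simp add: power2_eq_square algebra_simps)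
    finally show ?case .
  qed
  have BC: "AE \<omega> in M. eventually (\<lambda>n. \<bar>T (Suc n) \<omega>\<bar> \<le> e * real (Suc n)) sequentially" if e: "e > 0" for e
  proof -
    define A where "A n = {\<omega>\<in>space M. e * real (Suc n) < \<bar>T (Suc n) \<omega>\<bar>}" for n
    have Am[measurable]: "A n \<in> sets M" for n unfolding A_def by measurable
    have mA: "measure M (A n) \<le> (200 / e^4) * inverse (real (Suc n) ^ 2)" for n
    proof -
      define c where "c = (e * real (Suc n))^4"
      have c: "c > 0" unfolding c_def using e by simp
      have "A n \<subseteq> {\<omega>\<in>space M. c \<le> T (Suc n) \<omega> ^ 4}"
      proof
        fix \<omega> assume "\<omega> \<in> A n"
        then have w: "\<omega> \<in> space M" and lt: "e * real (Suc n) < \<bar>T (Suc n) \<omega>\<bar>" unfolding A_def by auto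
        have "(e * real (Suc n))^4 \<le> \<bar>T (Suc n) \<omega>\<bar>^4"
          by (rule power_mono) (use lt e in auto)
        then show "\<omega> \<in> {\<omega>\<in>space M. c \<le> T (Suc n) \<omega> ^ 4}" using w by (simp add: c_def power_abs)
      qed
      then have "measure M (A n) \<le> measure M {\<omega>\<in>space M. c \<le> T (Suc n) \<omega> ^ 4}"
        by (intro finite_measure_mono) auto
      also have "\<dots> \<le> (\<integral>\<omega>. T (Suc n) \<omega> ^ 4 \<partial>M) / c"
        by (rule integral_Markov_inequality_measure[where A="space M"]) (use intT' c in auto)
      also have "\<dots> \<le> 200 * real (Suc n) ^ 2 / c"
        by (rule divide_right_mono) (use E4[of "Suc n"] c in auto)
      also have "\<dots> = (200 / e^4) * inverse (real (Suc n) ^ 2)"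
      proof -
        define N where "N = real (Suc n)"
        have N: "N > 0" unfolding N_def by simp
        have "c = e^4 * (N^2 * N^2)" unfolding c_def N_def
          by (simp add: power_mult_distrib flip: power_add)
        then show ?thesis using N e unfolding N_def[symmetric]
          by (simp add: field_simps)
      qed
      finally show ?thesis .
    qed
    have "summable (\<lambda>n. (200 / e^4) * inverse (real (Suc n) ^ 2))"
    proof -
      have "summable (\<lambda>n. inverse (real n ^ 2))" by (rule inverse_power_summable) auto
      then have "summable (\<lambda>n. inverse (real (Suc n) ^ 2))" by (subst summable_Suc_iff)
      then show ?thesis by (rule summable_mult)
    qed
    then have "summable (\<lambda>n. measure M (A n))"
      by (rule summable_comparison_test'[where N=0]) (use mA in auto)
    then have "AE \<omega> in M. eventually (\<lambda>n. \<omega> \<in> space M - A n) sequentially"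
      by (intro borel_cantelli_AE1) (auto simp: less_top[symmetric])
    then show ?thesis
      by (rule AE_mp) (auto simp: A_def elim!: eventually_mono)
  qed
  have "AE \<omega> in M. \<forall>m. eventually (\<lambda>n. \<bar>T (Suc n) \<omega>\<bar> \<le> (1 / real (Suc m)) * real (Suc n)) sequentially"
    by (subst AE_all_countable) (intro allI BC, simp)
  then show ?thesis
  proof (rule AE_mp, intro AE_I2 impI)
    fix \<omega> assume H: "\<forall>m. eventually (\<lambda>n. \<bar>T (Suc n) \<omega>\<bar> \<le> (1 / real (Suc m)) * real (Suc n)) sequentially"
    have "(\<lambda>n. T (Suc n) \<omega> / real (Suc n)) \<longlonglongrightarrow> 0"
    proof (rule LIMSEQ_I)
      fix r :: real assume r: "r > 0"
      obtain m where m: "1 / real (Suc m) < r"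
        using reals_Archimedean r by (metis inverse_eq_divide of_nat_Suc)
      from H[rule_format, of m] obtain N where N: "\<And>n. n \<ge> N \<Longrightarrow> \<bar>T (Suc n) \<omega>\<bar> \<le> (1 / real (Suc m)) * real (Suc n)"
        unfolding eventually_sequentially by blast
      show "\<exists>N. \<forall>n\<ge>N. norm (T (Suc n) \<omega> / real (Suc n) - 0) < r"
      proof (intro exI allI impI)
        fix n assume "n \<ge> N"
        from N[OF this] have "\<bar>T (Suc n) \<omega>\<bar> / real (Suc n) \<le> 1 / real (Suc m)"
          by (simp add: divide_le_eq)
        then show "norm (T (Suc n) \<omega> / real (Suc n) - 0) < r" using m by simp
      qed
    qed
    then show "(\<lambda>n. (\<Sum>k<n. D k \<omega>) / real n) \<longlonglongrightarrow> 0"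
      using LIMSEQ_imp_Suc[of "\<lambda>n. T n \<omega> / real n"] unfolding T_def by simp
  qed
qed

lemma det_step:
  fixes z e :: "nat \<Rightarrow> real"
  assumes rec: "\<And>n. n \<ge> 1 \<Longrightarrow> z n = g * (\<Sum>k\<in>{1..<n}. z k) / real n + e n"
    and e: "e \<longlonglongrightarrow> 0"
    and P: "eventually (\<lambda>n. \<bar>z n\<bar> \<le> b) sequentially"
    and b: "b \<ge> 0" and eta: "\<eta> > 0"
  shows "eventually (\<lambda>n. \<bar>z n\<bar> \<le> \<bar>g\<bar> * b + \<eta>) sequentially"
proof -
  obtain N where N: "\<And>n. n \<ge> N \<Longrightarrow> \<bar>z n\<bar> \<le> b" using P unfolding eventually_sequentially by blast
  define K where "K = (\<Sum>k<N. \<bar>z k\<bar>)"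
  have K: "K \<ge> 0" unfolding K_def by (simp add: sum_nonneg)
  have sumb: "\<bar>\<Sum>k\<in>{1..<n}. z k\<bar> \<le> K + real n * b" if "n \<ge> 1" for n
  proof -
    have "\<bar>\<Sum>k\<in>{1..<n}. z k\<bar> \<le> (\<Sum>k\<in>{1..<n}. \<bar>z k\<bar>)" by (rule sum_abs)
    also have "\<dots> \<le> (\<Sum>k<n. \<bar>z k\<bar>)" by (rule sum_mono2) auto
    also have "\<dots> \<le> (\<Sum>k<N. \<bar>z k\<bar>) + (\<Sum>k<n. b)"
    proof -
      have "(\<Sum>k<n. \<bar>z k\<bar>) \<le> (\<Sum>k<max n N. \<bar>z k\<bar>)" by (rule sum_mono2) auto
      also have "\<dots> = (\<Sum>k<N. \<bar>z k\<bar>) + (\<Sum>k\<in>{N..<max n N}. \<bar>z k\<bar>)"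
        using sum.atLeastLessThan_concat[of 0 N "max n N" "\<lambda>k. \<bar>z k\<bar>"] by (simp add: atLeast0LessThan)
      also have "(\<Sum>k\<in>{N..<max n N}. \<bar>z k\<bar>) \<le> (\<Sum>k\<in>{N..<max n N}. b)"
        by (rule sum_mono) (use N in auto)
      also have "\<dots> \<le> (\<Sum>k<n. b)" using b by (cases "n \<le> N") (auto intro: mult_right_mono)
      finally show ?thesis by simp
    qed
    finally show ?thesis unfolding K_def by simp
  qed
  have ev1: "eventually (\<lambda>n. \<bar>e n\<bar> < \<eta>/2) sequentially"
  proof -
    have "\<eta>/2 > 0" using eta by simp
    from tendstoD[OF e this] show ?thesis by (simp add: dist_real_def)
  qed
  have "(\<lambda>n. \<bar>g\<bar> * K / real n) \<longlonglongrightarrow> 0"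
    by (intro tendsto_divide_0[OF tendsto_const] filterlim_at_top_imp_at_infinity[OF filterlim_real_sequentially])
  then have ev2: "eventually (\<lambda>n. \<bar>g\<bar> * K / real n < \<eta>/2) sequentially"
  proof -
    assume lim: "(\<lambda>n. \<bar>g\<bar> * K / real n) \<longlonglongrightarrow> 0"
    have "\<eta>/2 > 0" using eta by simp
    from tendstoD[OF lim this] show ?thesis
      by (rule eventually_mono) (use K in \<open>simp add: dist_real_def abs_mult\<close>)
  qed
  show ?thesis
    using ev1 ev2 eventually_ge_at_top[of 1]
  proof eventually_elim
    case (elim n)
    have n: "real n > 0" using elim by simp
    have "\<bar>z n\<bar> \<le> \<bar>g * (\<Sum>k\<in>{1..<n}. z k) / real n\<bar> + \<bar>e n\<bar>" using rec[of n] elim abs_triangle_ineq[of "g * (\<Sum>k\<in>{1..<n}. z k) / real n" "e n"] by simp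
    also have "\<bar>g * (\<Sum>k\<in>{1..<n}. z k) / real n\<bar> = \<bar>g\<bar> * \<bar>\<Sum>k\<in>{1..<n}. z k\<bar> / real n"
      using n by (simp add: abs_mult)
    also have "\<dots> \<le> \<bar>g\<bar> * (K + real n * b) / real n"
      by (intro divide_right_mono mult_left_mono sumb) (use elim in auto)
    also have "\<dots> = \<bar>g\<bar> * K / real n + \<bar>g\<bar> * b" using n by (simp add: field_simps)
    finally show ?case using elim by linarith
  qed
qed

lemma det_limit:
  fixes y e :: "nat \<Rightarrow> real"
  assumes g: "\<bar>g\<bar> < 1"
    and bnd: "\<And>n. \<bar>y n\<bar> \<le> B"
    and rec: "\<And>n. n \<ge> 1 \<Longrightarrow> y n = g * (\<Sum>k\<in>{1..<n}. y k) / real n + e n"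
    and e: "e \<longlonglongrightarrow> c"
  shows "y \<longlonglongrightarrow> c / (1 - g)"
proof -
  define L where "L = c / (1 - g)"
  have g1: "1 - g \<noteq> 0" using g by auto
  have cL: "c = L - g * L"
  proof -
    have "L - g * L = (1 - g) * L" by algebra
    also have "\<dots> = c" unfolding L_def using g1 by simp
    finally show ?thesis by simp
  qed
  define z where "z n = y n - L" for n
  define e' where "e' n = e n + g * L * (real n - 1) / real n - L" for n
  have recz: "z n = g * (\<Sum>k\<in>{1..<n}. z k) / real n + e' n" if n: "n \<ge> 1" for n
  proof -
    have "(\<Sum>k\<in>{1..<n}. z k) = (\<Sum>k\<in>{1..<n}. y k) - (\<Sum>k\<in>{1..<n}. L)"
      unfolding z_def by (rule sum_subtractf)
    also have "(\<Sum>k\<in>{1..<n}. L) = (real n - 1) * L" using n by (simp add: of_nat_diff)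
    finally have S: "(\<Sum>k\<in>{1..<n}. z k) = (\<Sum>k\<in>{1..<n}. y k) - (real n - 1) * L" .
    have n0: "real n > 0" using n by simp
    show ?thesis unfolding S unfolding z_def e'_def using rec[OF n] n0 by (simp add: field_simps)
  qed
  have "(\<lambda>n. e n + g * L * ((real n - 1) / real n) - L) \<longlonglongrightarrow> c + g * L * 1 - L"
  proof (intro tendsto_intros e)
    have "(\<lambda>n. 1 - 1 / real n) \<longlonglongrightarrow> 1 - 0"
      by (intro tendsto_intros filterlim_at_top_imp_at_infinity[OF filterlim_real_sequentially])
    moreover have "eventually (\<lambda>n. 1 - 1 / real n = (real n - 1) / real n) sequentially"
      using eventually_ge_at_top[of 1] by eventually_elim (auto simp: field_simps)
    ultimately show "(\<lambda>n. (real n - 1) / real n) \<longlonglongrightarrow> 1"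
      using tendsto_cong by force
  qed
  then have e': "e' \<longlonglongrightarrow> 0" unfolding e'_def using cL by (simp add: times_divide_eq_right)
  define B' where "B' = B + \<bar>L\<bar>"
  have zb: "\<bar>z n\<bar> \<le> B'" for n unfolding z_def B'_def using bnd[of n] by linarith
  have B'0: "B' \<ge> 0" using zb[of 0] by linarith
  have "z \<longlonglongrightarrow> 0"
  proof (rule LIMSEQ_I)
    fix r :: real assume r: "r > 0"
    have claim: "eventually (\<lambda>n. \<bar>z n\<bar> \<le> \<bar>g\<bar>^m * B' + r/2) sequentially" for m
    proof (induction m)
      case 0
      have "\<forall>n. \<bar>z n\<bar> \<le> \<bar>g\<bar>^0 * B' + r/2" using zb r by (simp add: add_increasing2)
      then show ?case by (rule always_eventually)
    next
      case (Suc m)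
      have "eventually (\<lambda>n. \<bar>z n\<bar> \<le> \<bar>g\<bar> * (\<bar>g\<bar>^m * B' + r/2) + (1 - \<bar>g\<bar>) * (r/2)) sequentially"
        by (rule det_step[OF recz e' Suc]) (use B'0 r g in auto)
      moreover have "\<bar>g\<bar> * (\<bar>g\<bar>^m * B' + r/2) + (1 - \<bar>g\<bar>) * (r/2) = \<bar>g\<bar>^Suc m * B' + r/2"
        by (simp add: algebra_simps add_divide_distrib diff_divide_distrib)
      ultimately show ?case by simp
    qed
    have "(\<lambda>m. \<bar>g\<bar>^m * B') \<longlonglongrightarrow> 0 * B'"
      by (intro tendsto_intros LIMSEQ_power_zero) (use g in auto)
    then have lim: "(\<lambda>m. \<bar>g\<bar>^m * B') \<longlonglongrightarrow> 0" by simp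
    have "r/2 > 0" using r by simp
    from tendstoD[OF lim this] have "eventually (\<lambda>m. \<bar>g\<bar>^m * B' < r/2) sequentially"
      by (rule eventually_mono) (simp add: dist_real_def)
    then obtain m where m: "\<bar>g\<bar>^m * B' < r/2"
      unfolding eventually_sequentially by blast
    from claim[of m] obtain N where "\<And>n. n \<ge> N \<Longrightarrow> \<bar>z n\<bar> \<le> \<bar>g\<bar>^m * B' + r/2"
      unfolding eventually_sequentially by blast
    then show "\<exists>N. \<forall>n\<ge>N. norm (z n - 0) < r" using m by force
  qed
  then have "(\<lambda>n. z n + L) \<longlonglongrightarrow> 0 + L" by (intro tendsto_intros)
  then show ?thesis unfolding z_def L_def by simp
qed

lemma toeplitz:
  fixes w u :: "nat \<Rightarrow> real"
  assumes w: "\<And>k. w k \<ge> 0"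
    and W: "filterlim (\<lambda>n. \<Sum>k\<in>{1..n}. w k) at_top sequentially"
    and u: "u \<longlonglongrightarrow> c"
  shows "(\<lambda>n. (\<Sum>k\<in>{1..n}. w k * u k) / (\<Sum>k\<in>{1..n}. w k)) \<longlonglongrightarrow> c"
proof (rule LIMSEQ_I)
  fix r :: real assume r: "r > 0"
  define W where "W n = (\<Sum>k\<in>{1..n}. w k)" for n
  have "r/2 > 0" using r by simp
  from tendstoD[OF u this] obtain N where N: "\<And>k. k \<ge> N \<Longrightarrow> \<bar>u k - c\<bar> < r/2"
    unfolding eventually_sequentially dist_real_def by blast
  define C where "C = (\<Sum>k<N. w k * \<bar>u k - c\<bar>)"
  have C: "C \<ge> 0" unfolding C_def using w by (simp add: sum_nonneg)
  have bound: "\<bar>(\<Sum>k\<in>{1..n}. w k * u k) - c * W n\<bar> \<le> C + r/2 * W n" for n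
  proof -
    have "(\<Sum>k\<in>{1..n}. w k * u k) - c * W n = (\<Sum>k\<in>{1..n}. w k * (u k - c))"
      unfolding W_def by (simp add: sum_distrib_left algebra_simps sum_subtractf)
    also have "\<bar>\<dots>\<bar> \<le> (\<Sum>k\<in>{1..n}. w k * \<bar>u k - c\<bar>)"
      using sum_abs[of "\<lambda>k. w k * (u k - c)" "{1..n}"] w by (simp add: abs_mult)
    also have "\<dots> = (\<Sum>k\<in>{1..n} \<inter> {..<N}. w k * \<bar>u k - c\<bar>) + (\<Sum>k\<in>{1..n} - {..<N}. w k * \<bar>u k - c\<bar>)"
      by (rule sum.Int_Diff) simp
    also have "(\<Sum>k\<in>{1..n} \<inter> {..<N}. w k * \<bar>u k - c\<bar>) \<le> C"
      unfolding C_def by (rule sum_mono2) (use w in auto)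
    also have "(\<Sum>k\<in>{1..n} - {..<N}. w k * \<bar>u k - c\<bar>) \<le> (\<Sum>k\<in>{1..n} - {..<N}. w k * (r/2))"
    proof (rule sum_mono)
      fix k assume "k \<in> {1..n} - {..<N}"
      then have "\<bar>u k - c\<bar> \<le> r/2" using N[of k] by auto
      then show "w k * \<bar>u k - c\<bar> \<le> w k * (r/2)" using w[of k] by (rule mult_left_mono)
    qed
    also have "\<dots> \<le> (\<Sum>k\<in>{1..n}. w k * (r/2))"
      by (rule sum_mono2) (use w r in auto)
    also have "\<dots> = r/2 * W n" unfolding W_def by (simp add: sum_distrib_left mult.commute)
    finally show ?thesis by simp
  qed
  have ev: "eventually (\<lambda>n. W n > 2 * C / r + 1) sequentially"
    using W unfolding W_def filterlim_at_top_dense by blast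
  then obtain M where M: "\<And>n. n \<ge> M \<Longrightarrow> W n > 2 * C / r + 1"
    unfolding eventually_sequentially by blast
  show "\<exists>no. \<forall>n\<ge>no. norm ((\<Sum>k\<in>{1..n}. w k * u k) / (\<Sum>k\<in>{1..n}. w k) - c) < r"
  proof (intro exI allI impI)
    fix n assume "n \<ge> M"
    then have Wn: "W n > 2 * C / r + 1" by (rule M)
    have Wp: "W n > 0" using Wn C r by (smt (verit) divide_nonneg_pos)
    have CW: "C < r/2 * W n"
    proof -
      have "2 * C / r < W n" using Wn by linarith
      then have "2 * C < W n * r" using r by (simp add: divide_less_eq)
      then show ?thesis by (simp add: mult.commute)
    qed
    have "(\<Sum>k\<in>{1..n}. w k * u k) / W n - c = ((\<Sum>k\<in>{1..n}. w k * u k) - c * W n) / W n"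
      using Wp by (simp add: field_simps)
    then have "\<bar>(\<Sum>k\<in>{1..n}. w k * u k) / W n - c\<bar> = \<bar>(\<Sum>k\<in>{1..n}. w k * u k) - c * W n\<bar> / W n"
      using Wp by simp
    also have "\<dots> \<le> (C + r/2 * W n) / W n" by (rule divide_right_mono[OF bound]) (use Wp in simp)
    also have "\<dots> < (r/2 * W n + r/2 * W n) / W n" by (rule divide_strict_right_mono) (use CW Wp in auto)
    also have "\<dots> = r" using Wp by simp
    finally show "norm ((\<Sum>k\<in>{1..n}. w k * u k) / (\<Sum>k\<in>{1..n}. w k) - c) < r"
      unfolding W_def by simp
  qed
qed

lemma nat_filt_gen_subset:
  assumes meas: "\<And>i. X i \<in> borel_measurable M"
  shows "(\<Union>i\<in>{1..n}. {X i -` A \<inter> space M | A. A \<in> sets borel}) \<subseteq> sets M"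
  using meas by (auto intro: measurable_sets)

lemma nat_filt_gen_Pow:
  "(\<Union>i\<in>{1..n}. {X i -` A \<inter> space M | A. A \<in> sets borel}) \<subseteq> Pow (space M)"
  by auto

lemma space_nat_filt: "space (nat_filt M X n) = space M"
  unfolding nat_filt_def by (rule space_measure_of[OF nat_filt_gen_Pow])

lemma sets_nat_filt: "sets (nat_filt M X n) = sigma_sets (space M) (\<Union>i\<in>{1..n}. {X i -` A \<inter> space M | A. A \<in> sets borel})"
  unfolding nat_filt_def by (rule sets_measure_of[OF nat_filt_gen_Pow])

lemma subalgebra_nat_filt:
  assumes meas: "\<And>i. X i \<in> borel_measurable M"
  shows "subalgebra M (nat_filt M X n)"
  unfolding subalgebra_def
proof
  show "space (nat_filt M X n) = space M" by (rule space_nat_filt)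
  show "sets (nat_filt M X n) \<subseteq> sets M"
    unfolding sets_nat_filt by (rule sets.sigma_sets_subset[OF nat_filt_gen_subset[OF meas]])
qed

lemma sfs_nat_filt:
  assumes P: "prob_space M" and meas: "\<And>i. X i \<in> borel_measurable M"
  shows "sigma_finite_subalgebra M (nat_filt M X n)"
proof -
  interpret prob_space M by (rule P)
  have "finite_measure_subalgebra M (nat_filt M X n)"
    unfolding finite_measure_subalgebra_def finite_measure_subalgebra_axioms_def
    using subalgebra_nat_filt[of X M n] meas finite_measure_axioms by blast
  then show ?thesis by (rule finite_measure_subalgebra_is_sigma_finite)
qed

lemma X_meas_nat_filt:
  assumes "1 \<le> i" "i \<le> n"
  shows "X i \<in> borel_measurable (nat_filt M X n)"
proof (rule measurableI)
  fix A :: "real set" assume A: "A \<in> sets borel"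
  have "X i -` A \<inter> space M \<in> (\<Union>i\<in>{1..n}. {X i -` A \<inter> space M | A. A \<in> sets borel})"
    using assms A by (intro UN_I[of i]) auto
  then show "X i -` A \<inter> space (nat_filt M X n) \<in> sets (nat_filt M X n)"
    unfolding sets_nat_filt space_nat_filt by (rule sigma_sets.Basic)
qed simp

lemma real_cnt: "real (cnt X c n \<omega>) = (\<Sum>i\<in>{1..n}. if X i \<omega> = c then 1 else 0)"
proof -
  have "real (cnt X c n \<omega>) = (\<Sum>i\<in>{i\<in>{1..n}. X i \<omega> = c}. 1)"
    unfolding cnt_def by simp
  also have "\<dots> = (\<Sum>i\<in>{1..n}. if X i \<omega> = c then 1 else 0)"
    by (rule sum.inter_filter) simp
  finally show ?thesis .
qed

lemma cnt_meas_nat_filt: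
  assumes "k \<le> n"
  shows "(\<lambda>\<omega>. real (cnt X c k \<omega>)) \<in> borel_measurable (nat_filt M X n)"
proof -
  have [measurable]: "X i \<in> borel_measurable (nat_filt M X n)" if "i \<in> {1..k}" for i
    using X_meas_nat_filt[of i n X M] that assms by auto
  show ?thesis unfolding real_cnt
    by (intro borel_measurable_sum) measurable
qed

lemma psum_meas_nat_filt:
  assumes "k \<le> n"
  shows "partial_sum X k \<in> borel_measurable (nat_filt M X n)"
proof -
  have [measurable]: "X i \<in> borel_measurable (nat_filt M X n)" if "i \<in> {1..k}" for i
    using X_meas_nat_filt[of i n X M] that assms by auto
  have "(\<lambda>\<omega>. \<Sum>i\<in>{1..k}. X i \<omega>) \<in> borel_measurable (nat_filt M X n)"
    by (intro borel_measurable_sum) measurable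
  then show ?thesis unfolding partial_sum_def[abs_def] .
qed

lemma a_pos: "a \<ge> 0 \<Longrightarrow> a_seq a k > 0"
  unfolding a_seq_def by (intro prod_pos) (auto intro: add_pos_nonneg)

lemma a_one: "a_seq a 1 = 1" unfolding a_seq_def by simp

lemma a_Suc: "k \<ge> 1 \<Longrightarrow> a_seq a (Suc k) = a_seq a k * (1 + a / real k)"
  unfolding a_seq_def by (simp add: prod.atLeastLessThan_Suc)

lemma a_sq_le:
  assumes a: "0 \<le> a" "a \<le> 1/2" and k: "k \<ge> 1"
  shows "a_seq a k ^ 2 \<le> 2 * real k - 1"
  using k
proof (induction k)
  case 0 then show ?case by simp
next
  case (Suc k)
  show ?case
  proof (cases "k = 0")
    case True then show ?thesis by (simp add: a_seq_def)
  next
    case False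
    then have k1: "k \<ge> 1" by simp
    define x where "x = real k"
    have x: "x \<ge> 1" using k1 unfolding x_def by simp
    have IH: "a_seq a k ^ 2 \<le> 2 * x - 1" using Suc.IH k1 unfolding x_def by simp
    have f0: "0 \<le> 1 + a / x" using a x by simp
    have "a / x \<le> (1/2) / x" using a x by (intro divide_right_mono) auto
    then have f1: "1 + a / x \<le> 1 + 1 / (2 * x)" by simp
    have "(1 + a / x)^2 \<le> (1 + 1 / (2 * x))^2" by (rule power_mono[OF f1 f0])
    then have "a_seq a k ^ 2 * (1 + a / x)^2 \<le> (2 * x - 1) * (1 + 1 / (2 * x))^2"
      using x by (intro mult_mono IH) auto
    also have "\<dots> \<le> 2 * x + 1"
    proof -
      have "(2 * x - 1) * (1 + 1 / (2 * x))^2 = (2 * x - 1) * (2 * x + 1)^2 / (4 * x^2)"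
        using x by (simp add: field_simps power2_eq_square)
      also have "\<dots> \<le> (2 * x + 1) * (4 * x^2) / (4 * x^2)"
      proof (rule divide_right_mono)
        have "(2 * x - 1) * (2 * x + 1) \<le> 4 * x^2" by (simp add: power2_eq_square algebra_simps)
        then have "(2 * x - 1) * (2 * x + 1) * (2 * x + 1) \<le> 4 * x^2 * (2 * x + 1)"
          using x by (intro mult_right_mono) auto
        then show "(2 * x - 1) * (2 * x + 1)^2 \<le> (2 * x + 1) * (4 * x^2)"
          by (simp add: power2_eq_square algebra_simps)
      qed simp
      also have "\<dots> = 2 * x + 1" using x by simp
      finally show ?thesis .
    qed
    finally have "a_seq a k ^ 2 * (1 + a / x)^2 \<le> 2 * x + 1" .
    moreover have "a_seq a (Suc k) ^ 2 = a_seq a k ^ 2 * (1 + a / x)^2"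
      unfolding a_Suc[OF k1] x_def by (simp add: power_mult_distrib)
    ultimately show ?thesis unfolding x_def by simp
  qed
qed

lemma v_div:
  assumes a: "0 \<le> a" "a \<le> 1/2"
  shows "filterlim (\<lambda>n. \<Sum>k\<in>{1..n}. 1 / (a_seq a k)^2) at_top sequentially"
proof -
  have lb: "harm n / 2 \<le> (\<Sum>k\<in>{1..n}. 1 / (a_seq a k)^2)" for n
  proof -
    have "harm n / 2 = (\<Sum>k\<in>{1..n}. 1 / (2 * real k))" unfolding harm_def
      by (simp add: sum_divide_distrib field_simps)
    also have "\<dots> \<le> (\<Sum>k\<in>{1..n}. 1 / (a_seq a k)^2)"
    proof (rule sum_mono)
      fix k assume "k \<in> {1..n}"
      then have k: "k \<ge> 1" by simp
      have p: "a_seq a k ^ 2 > 0" using a_pos[OF a(1), of k] by simp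
      have "a_seq a k ^ 2 \<le> 2 * real k" using a_sq_le[OF a k] by simp
      then show "1 / (2 * real k) \<le> 1 / (a_seq a k)^2"
        using p k by (intro divide_left_mono) auto
    qed
    finally show ?thesis .
  qed
  have lnlim: "filterlim (\<lambda>n. ln (real n + 1)) at_top sequentially"
  proof (rule filterlim_compose[OF ln_at_top])
    show "filterlim (\<lambda>n. real n + 1) at_top sequentially"
      by (rule filterlim_at_top_mono[OF filterlim_real_sequentially]) auto
  qed
  show ?thesis unfolding filterlim_at_top
  proof
    fix Z :: real
    have "eventually (\<lambda>n. 2 * Z \<le> ln (real n + 1)) sequentially"
      using lnlim unfolding filterlim_at_top by blast
    then show "eventually (\<lambda>n. Z \<le> (\<Sum>k\<in>{1..n}. 1 / (a_seq a k)^2)) sequentially"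
    proof (rule eventually_mono)
      fix n assume "2 * Z \<le> ln (real n + 1)"
      then show "Z \<le> (\<Sum>k\<in>{1..n}. 1 / (a_seq a k)^2)" using ln_le_harm[of n] lb[of n] by linarith
    qed
  qed
qed

lemma intb:
  assumes "finite_measure M" "f \<in> borel_measurable M" "\<And>\<omega>. \<omega> \<in> space M \<Longrightarrow> \<bar>f \<omega>\<bar> \<le> (B::real)"
  shows "integrable M f"
  by (rule finite_measure.integrable_const_bound[where B=B]) (use assms in auto)

locale mdl =
  fixes M :: "'a measure" and X :: "nat \<Rightarrow> 'a \<Rightarrow> real"
    and p q r \<theta> :: real
  assumes P: "prob_space M"
    and pqr: "p \<ge> 0" "q \<ge> 0" "r \<ge> 0" "p + q + r = 1"
    and th: "0 \<le> \<theta>" "\<theta> < 1"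
    and meas: "\<And>i. X i \<in> borel_measurable M"
    and vals: "\<And>i \<omega>. i \<ge> 1 \<Longrightarrow> \<omega> \<in> space M \<Longrightarrow> X i \<omega> \<in> {-1, 0, 1}"
    and step_plus: "\<And>n. n \<ge> 1 \<Longrightarrow> AE \<omega> in M.
       real_cond_exp M (nat_filt M X n) (indicator {\<omega>\<in>space M. X (Suc n) \<omega> = 1}) \<omega>
       = \<theta> * (real (cnt X 1 n \<omega>) / real n * p + real (cnt X (-1) n \<omega>) / real n * q) + (1 - \<theta>) * p"
    and step_minus: "\<And>n. n \<ge> 1 \<Longrightarrow> AE \<omega> in M.
       real_cond_exp M (nat_filt M X n) (indicator {\<omega>\<in>space M. X (Suc n) \<omega> = -1}) \<omega>
       = \<theta> * (real (cnt X (-1) n \<omega>) / real n * p + real (cnt X 1 n \<omega>) / real n * q) + (1 - \<theta>) * q"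
    and step_zero: "\<And>n. n \<ge> 1 \<Longrightarrow> AE \<omega> in M.
       real_cond_exp M (nat_filt M X n) (indicator {\<omega>\<in>space M. X (Suc n) \<omega> = 0}) \<omega>
       = \<theta> * (p + q) * (real (cnt X 0 n \<omega>) / real n) + r"
begin

abbreviation "F \<equiv> nat_filt M X"
abbreviation "al \<equiv> (p - q) * \<theta>"
abbreviation "om \<equiv> (p - q) * (1 - \<theta>)"
abbreviation "ta \<equiv> (1 - \<theta>) * (p + q)"
abbreviation "ga \<equiv> (p + q) * \<theta>"

definition g :: "nat \<Rightarrow> 'a \<Rightarrow> real" where
  "g n \<omega> = al * partial_sum X n \<omega> / real n + om"

definition h :: "nat \<Rightarrow> 'a \<Rightarrow> real" where
  "h n \<omega> = ga * (1 - real (cnt X 0 n \<omega>) / real n) + ta - (g n \<omega>)^2"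

lemma fm: "finite_measure M"
  using P by (simp add: prob_space_def)

lemma sfs: "sigma_finite_subalgebra M (F n)"
  using sfs_nat_filt[of M X n] P meas by blast

lemma subalg: "subalgebra M (F n)"
  using subalgebra_nat_filt[of X M n] meas by blast

lemma to_M: "f \<in> borel_measurable (F n) \<Longrightarrow> f \<in> borel_measurable M"
  using measurable_from_subalg[OF subalg] by blast

lemma cnt_le: "cnt X c n \<omega> \<le> n"
proof -
  have "cnt X c n \<omega> \<le> card {1..n}" unfolding cnt_def by (rule card_mono) auto
  then show ?thesis by simp
qed

lemma cnt_sum:
  assumes "\<omega> \<in> space M"
  shows "real (cnt X 1 n \<omega>) + real (cnt X (-1) n \<omega>) + real (cnt X 0 n \<omega>) = real n"
proof -
  have "real (cnt X 1 n \<omega>) + real (cnt X (-1) n \<omega>) + real (cnt X 0 n \<omega>)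
      = (\<Sum>i\<in>{1..n}. (if X i \<omega> = 1 then 1 else 0) + (if X i \<omega> = -1 then 1 else 0) + (if X i \<omega> = 0 then 1 else 0))"
    unfolding real_cnt by (simp add: sum.distrib)
  also have "\<dots> = (\<Sum>i\<in>{1..n}. 1)"
  proof (rule sum.cong)
    fix i assume "i \<in> {1..n}"
    then have "X i \<omega> \<in> {-1,0,1}" using vals[of i \<omega>] assms by auto
    then show "(if X i \<omega> = 1 then 1 else 0) + (if X i \<omega> = -1 then 1 else 0) + (if X i \<omega> = 0 then 1 else (0::real)) = 1"
      by auto
  qed simp
  finally show ?thesis by simp
qed

lemma psum_cnt:
  assumes "\<omega> \<in> space M"
  shows "partial_sum X n \<omega> = real (cnt X 1 n \<omega>) - real (cnt X (-1) n \<omega>)"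
proof -
  have "partial_sum X n \<omega> = (\<Sum>i\<in>{1..n}. (if X i \<omega> = 1 then 1 else 0) - (if X i \<omega> = -1 then 1 else 0))"
    unfolding partial_sum_def
  proof (rule sum.cong)
    fix i assume "i \<in> {1..n}"
    then have "X i \<omega> \<in> {-1,0,1}" using vals[of i \<omega>] assms by auto
    then show "X i \<omega> = (if X i \<omega> = 1 then 1 else 0) - (if X i \<omega> = -1 then 1 else (0::real))"
      by auto
  qed simp
  then show ?thesis unfolding real_cnt by (simp add: sum_subtractf)
qed

lemma psum_bound:
  assumes "\<omega> \<in> space M"
  shows "\<bar>partial_sum X n \<omega>\<bar> \<le> real n"
  using psum_cnt[OF assms, of n] cnt_le[of 1 n \<omega>] cnt_le[of "-1" n \<omega>] by linarith

lemma X_bound: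
  assumes "\<omega> \<in> space M" "i \<ge> 1"
  shows "\<bar>X i \<omega>\<bar> \<le> 1"
  using vals[OF assms(2,1)] by auto

lemma psum_meas: "partial_sum X k \<in> borel_measurable M"
  using to_M[OF psum_meas_nat_filt[of k k X M]] by simp

lemma cnt_meas: "(\<lambda>\<omega>. real (cnt X c k \<omega>)) \<in> borel_measurable M"
  using to_M[OF cnt_meas_nat_filt[of k k X c M]] by simp

lemma g_meas_F: "g n \<in> borel_measurable (F n)"
  unfolding g_def[abs_def] using psum_meas_nat_filt[of n n X M] by measurable

lemma g_meas: "g n \<in> borel_measurable M"
  by (rule to_M[OF g_meas_F])

lemma g_bound:
  assumes "\<omega> \<in> space M"
  shows "\<bar>g n \<omega>\<bar> \<le> \<bar>al\<bar> + \<bar>om\<bar>"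
proof -
  have "\<bar>partial_sum X n \<omega> / real n\<bar> \<le> 1"
    using psum_bound[OF assms, of n] by (cases "n = 0") (auto simp: divide_le_eq)
  then have "\<bar>al\<bar> * \<bar>partial_sum X n \<omega> / real n\<bar> \<le> \<bar>al\<bar> * 1"
    by (intro mult_left_mono) auto
  then have "\<bar>al * partial_sum X n \<omega> / real n\<bar> \<le> \<bar>al\<bar>"
    by (simp add: abs_mult)
  then show ?thesis unfolding g_def by linarith
qed

definition Ind :: "nat \<Rightarrow> real \<Rightarrow> 'a \<Rightarrow> real" where
  "Ind n c = indicator {\<omega>\<in>space M. X n \<omega> = c}"

lemma Ind_meas: "Ind n c \<in> borel_measurable M"
  unfolding Ind_def using meas[of n] by measurable

lemma Ind_int: "integrable M (Ind n c)"
  by (rule intb[where B=1, OF fm Ind_meas]) (simp add: Ind_def indicator_def)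

lemma X_Ind:
  assumes "\<omega> \<in> space M" "n \<ge> 1"
  shows "X n \<omega> = Ind n 1 \<omega> - Ind n (-1) \<omega>" "X n \<omega> ^ 2 = Ind n 1 \<omega> + Ind n (-1) \<omega>"
  using vals[OF assms(2,1)] assms(1) by (auto simp: Ind_def)

end

context mdl begin

lemma ce_X:
  assumes n: "n \<ge> 1"
  shows "AE \<omega> in M. real_cond_exp M (F n) (X (Suc n)) \<omega> = g n \<omega>"
proof -
  interpret sigma_finite_subalgebra M "F n" by (rule sfs)
  have 1: "AE \<omega> in M. real_cond_exp M (F n) (X (Suc n)) \<omega> = real_cond_exp M (F n) (\<lambda>\<omega>. Ind (Suc n) 1 \<omega> - Ind (Suc n) (-1) \<omega>) \<omega>"
  proof (rule real_cond_exp_cong)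
    show "AE \<omega> in M. X (Suc n) \<omega> = Ind (Suc n) 1 \<omega> - Ind (Suc n) (-1) \<omega>"
      using AE_space by eventually_elim (rule X_Ind(1), auto)
  qed (intro borel_measurable_diff Ind_meas meas)+
  have 2: "AE \<omega> in M. real_cond_exp M (F n) (\<lambda>\<omega>. Ind (Suc n) 1 \<omega> - Ind (Suc n) (-1) \<omega>) \<omega>
       = real_cond_exp M (F n) (Ind (Suc n) 1) \<omega> - real_cond_exp M (F n) (Ind (Suc n) (-1)) \<omega>"
    by (rule real_cond_exp_diff[OF Ind_int Ind_int])
  have 3: "AE \<omega> in M. real_cond_exp M (F n) (Ind (Suc n) 1) \<omega>
       = \<theta> * (real (cnt X 1 n \<omega>) / real n * p + real (cnt X (-1) n \<omega>) / real n * q) + (1 - \<theta>) * p"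
    using step_plus[OF n] unfolding Ind_def .
  have 4: "AE \<omega> in M. real_cond_exp M (F n) (Ind (Suc n) (-1)) \<omega>
       = \<theta> * (real (cnt X (-1) n \<omega>) / real n * p + real (cnt X 1 n \<omega>) / real n * q) + (1 - \<theta>) * q"
    using step_minus[OF n] unfolding Ind_def .
  show ?thesis using 1 2 3 4 AE_space
  proof eventually_elim
    case (elim \<omega>)
    have nn: "real n > 0" using n by simp
    have gg: "g n \<omega> = al * (real (cnt X 1 n \<omega>) - real (cnt X (-1) n \<omega>)) / real n + om"
      unfolding g_def psum_cnt[OF elim(5)] ..
    have "real_cond_exp M (F n) (X (Suc n)) \<omega> = real_cond_exp M (F n) (Ind (Suc n) 1) \<omega> - real_cond_exp M (F n) (Ind (Suc n) (-1)) \<omega>"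
      using elim(1,2) by simp
    also have "\<dots> = \<theta> * (real (cnt X 1 n \<omega>) / real n * p + real (cnt X (-1) n \<omega>) / real n * q) + (1 - \<theta>) * p
       - (\<theta> * (real (cnt X (-1) n \<omega>) / real n * p + real (cnt X 1 n \<omega>) / real n * q) + (1 - \<theta>) * q)"
      using elim(3,4) by simp
    also have "\<dots> = g n \<omega>" unfolding gg using nn by (simp add: field_simps)
    finally show ?case .
  qed
qed

lemma ce_X2:
  assumes n: "n \<ge> 1"
  shows "AE \<omega> in M. real_cond_exp M (F n) (\<lambda>\<omega>. X (Suc n) \<omega> ^ 2) \<omega> = ga * (1 - real (cnt X 0 n \<omega>) / real n) + ta"
proof -
  interpret sigma_finite_subalgebra M "F n" by (rule sfs)
  have 1: "AE \<omega> in M. real_cond_exp M (F n) (\<lambda>\<omega>. X (Suc n) \<omega> ^ 2) \<omega> = real_cond_exp M (F n) (\<lambda>\<omega>. Ind (Suc n) 1 \<omega> + Ind (Suc n) (-1) \<omega>) \<omega>"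
  proof (rule real_cond_exp_cong)
    show "AE \<omega> in M. X (Suc n) \<omega> ^ 2 = Ind (Suc n) 1 \<omega> + Ind (Suc n) (-1) \<omega>"
      using AE_space by eventually_elim (rule X_Ind(2), auto)
    show "(\<lambda>\<omega>. X (Suc n) \<omega> ^ 2) \<in> borel_measurable M" using meas[of "Suc n"] by measurable
  qed (intro borel_measurable_add Ind_meas)
  have 2: "AE \<omega> in M. real_cond_exp M (F n) (\<lambda>\<omega>. Ind (Suc n) 1 \<omega> + Ind (Suc n) (-1) \<omega>) \<omega>
       = real_cond_exp M (F n) (Ind (Suc n) 1) \<omega> + real_cond_exp M (F n) (Ind (Suc n) (-1)) \<omega>"
    by (rule real_cond_exp_add[OF Ind_int Ind_int])
  have 3: "AE \<omega> in M. real_cond_exp M (F n) (Ind (Suc n) 1) \<omega>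
       = \<theta> * (real (cnt X 1 n \<omega>) / real n * p + real (cnt X (-1) n \<omega>) / real n * q) + (1 - \<theta>) * p"
    using step_plus[OF n] unfolding Ind_def .
  have 4: "AE \<omega> in M. real_cond_exp M (F n) (Ind (Suc n) (-1)) \<omega>
       = \<theta> * (real (cnt X (-1) n \<omega>) / real n * p + real (cnt X 1 n \<omega>) / real n * q) + (1 - \<theta>) * q"
    using step_minus[OF n] unfolding Ind_def .
  show ?thesis using 1 2 3 4 AE_space
  proof eventually_elim
    case (elim \<omega>)
    have c: "real (cnt X 1 n \<omega>) + real (cnt X (-1) n \<omega>) = real n - real (cnt X 0 n \<omega>)"
      using cnt_sum[OF elim(5), of n] by linarith
    have nn: "real n > 0" using n by simp
    have "\<theta> * (real (cnt X 1 n \<omega>) / real n * p + real (cnt X (-1) n \<omega>) / real n * q) + (1 - \<theta>) * p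
       + (\<theta> * (real (cnt X (-1) n \<omega>) / real n * p + real (cnt X 1 n \<omega>) / real n * q) + (1 - \<theta>) * q)
       = ga * ((real (cnt X 1 n \<omega>) + real (cnt X (-1) n \<omega>)) / real n) + ta"
      using nn by (simp add: field_simps)
    also have "\<dots> = ga * (1 - real (cnt X 0 n \<omega>) / real n) + ta"
      unfolding c using nn by (simp add: field_simps)
    finally show ?case using elim(1-4) by simp
  qed
qed

lemma ce_var:
  assumes n: "n \<ge> 1"
  shows "AE \<omega> in M. real_cond_exp M (F n) (\<lambda>\<omega>. (X (Suc n) \<omega> - g n \<omega>) ^ 2) \<omega> = h n \<omega>"
proof -
  interpret sigma_finite_subalgebra M "F n" by (rule sfs)
  have Xm: "X (Suc n) \<in> borel_measurable M" by (rule meas)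
  have gm: "g n \<in> borel_measurable M" by (rule g_meas)
  have gmF: "(\<lambda>\<omega>. -2 * g n \<omega>) \<in> borel_measurable (F n)" using g_meas_F by measurable
  have iX2: "integrable M (\<lambda>\<omega>. X (Suc n) \<omega> ^ 2)"
  proof (rule intb[where B=1, OF fm])
    show "(\<lambda>\<omega>. X (Suc n) \<omega> ^ 2) \<in> borel_measurable M" using Xm by measurable
    fix \<omega> assume "\<omega> \<in> space M"
    then have "\<bar>X (Suc n) \<omega>\<bar> ^ 2 \<le> 1 ^ 2" by (intro power_mono X_bound) auto
    then show "\<bar>X (Suc n) \<omega> ^ 2\<bar> \<le> 1" by (simp add: power_abs)
  qed
  have igX: "integrable M (\<lambda>\<omega>. -2 * g n \<omega> * X (Suc n) \<omega>)"
  proof (rule intb[where B="2 * (\<bar>al\<bar> + \<bar>om\<bar>)", OF fm])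
    show "(\<lambda>\<omega>. -2 * g n \<omega> * X (Suc n) \<omega>) \<in> borel_measurable M" using Xm gm by measurable
    fix \<omega> assume w: "\<omega> \<in> space M"
    have "\<bar>-2 * g n \<omega> * X (Suc n) \<omega>\<bar> = 2 * \<bar>g n \<omega>\<bar> * \<bar>X (Suc n) \<omega>\<bar>" by (simp add: abs_mult)
    also have "\<dots> \<le> 2 * (\<bar>al\<bar> + \<bar>om\<bar>) * 1"
      by (intro mult_mono g_bound X_bound w) auto
    finally show "\<bar>-2 * g n \<omega> * X (Suc n) \<omega>\<bar> \<le> 2 * (\<bar>al\<bar> + \<bar>om\<bar>)" by simp
  qed
  have ig2: "integrable M (\<lambda>\<omega>. g n \<omega> ^ 2)"
  proof (rule intb[where B="(\<bar>al\<bar> + \<bar>om\<bar>)^2", OF fm])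
    show "(\<lambda>\<omega>. g n \<omega> ^ 2) \<in> borel_measurable M" using gm by measurable
    fix \<omega> assume w: "\<omega> \<in> space M"
    have "\<bar>g n \<omega>\<bar> ^ 2 \<le> (\<bar>al\<bar> + \<bar>om\<bar>)^2" by (intro power_mono g_bound w) auto
    then show "\<bar>g n \<omega> ^ 2\<bar> \<le> (\<bar>al\<bar> + \<bar>om\<bar>)^2" by (simp add: power_abs)
  qed
  have 1: "AE \<omega> in M. real_cond_exp M (F n) (\<lambda>\<omega>. (X (Suc n) \<omega> - g n \<omega>) ^ 2) \<omega>
      = real_cond_exp M (F n) (\<lambda>\<omega>. (X (Suc n) \<omega> ^ 2 + -2 * g n \<omega> * X (Suc n) \<omega>) + g n \<omega> ^ 2) \<omega>"
  proof (rule real_cond_exp_cong)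
    show "AE \<omega> in M. (X (Suc n) \<omega> - g n \<omega>) ^ 2 = (X (Suc n) \<omega> ^ 2 + -2 * g n \<omega> * X (Suc n) \<omega>) + g n \<omega> ^ 2"
      by (rule AE_I2) (simp add: power2_eq_square algebra_simps)
    show "(\<lambda>\<omega>. (X (Suc n) \<omega> - g n \<omega>) ^ 2) \<in> borel_measurable M" using Xm gm by measurable
    show "(\<lambda>\<omega>. (X (Suc n) \<omega> ^ 2 + -2 * g n \<omega> * X (Suc n) \<omega>) + g n \<omega> ^ 2) \<in> borel_measurable M"
      using Xm gm by measurable
  qed
  have 2: "AE \<omega> in M. real_cond_exp M (F n) (\<lambda>\<omega>. (X (Suc n) \<omega> ^ 2 + -2 * g n \<omega> * X (Suc n) \<omega>) + g n \<omega> ^ 2) \<omega>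
      = real_cond_exp M (F n) (\<lambda>\<omega>. X (Suc n) \<omega> ^ 2 + -2 * g n \<omega> * X (Suc n) \<omega>) \<omega> + real_cond_exp M (F n) (\<lambda>\<omega>. g n \<omega> ^ 2) \<omega>"
    by (rule real_cond_exp_add) (use iX2 igX ig2 in auto)
  have 3: "AE \<omega> in M. real_cond_exp M (F n) (\<lambda>\<omega>. X (Suc n) \<omega> ^ 2 + -2 * g n \<omega> * X (Suc n) \<omega>) \<omega>
      = real_cond_exp M (F n) (\<lambda>\<omega>. X (Suc n) \<omega> ^ 2) \<omega> + real_cond_exp M (F n) (\<lambda>\<omega>. -2 * g n \<omega> * X (Suc n) \<omega>) \<omega>"
    by (rule real_cond_exp_add[OF iX2 igX])
  have 4: "AE \<omega> in M. real_cond_exp M (F n) (\<lambda>\<omega>. -2 * g n \<omega> * X (Suc n) \<omega>) \<omega> = -2 * g n \<omega> * real_cond_exp M (F n) (X (Suc n)) \<omega>"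
    by (rule real_cond_exp_mult[OF gmF Xm igX])
  have 5: "AE \<omega> in M. real_cond_exp M (F n) (\<lambda>\<omega>. g n \<omega> ^ 2) \<omega> = g n \<omega> ^ 2"
    by (rule real_cond_exp_F_meas[OF ig2]) (use g_meas_F in measurable)
  show ?thesis using 1 2 3 4 5 ce_X[OF n] ce_X2[OF n]
  proof eventually_elim
    case (elim \<omega>)
    then show ?case unfolding h_def by (simp add: power2_eq_square algebra_simps)
  qed
qed

lemma ce_var':
  assumes n: "n \<ge> 1"
  shows "AE \<omega> in M. real_cond_exp M (F n) (\<lambda>\<omega>'. (X (Suc n) \<omega>' - real_cond_exp M (F n) (X (Suc n)) \<omega>') ^ 2) \<omega> = h n \<omega>"
proof -
  interpret sigma_finite_subalgebra M "F n" by (rule sfs)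
  have "AE \<omega> in M. real_cond_exp M (F n) (\<lambda>\<omega>'. (X (Suc n) \<omega>' - real_cond_exp M (F n) (X (Suc n)) \<omega>') ^ 2) \<omega>
       = real_cond_exp M (F n) (\<lambda>\<omega>. (X (Suc n) \<omega> - g n \<omega>) ^ 2) \<omega>"
  proof (rule real_cond_exp_cong)
    show "AE \<omega> in M. (X (Suc n) \<omega> - real_cond_exp M (F n) (X (Suc n)) \<omega>) ^ 2 = (X (Suc n) \<omega> - g n \<omega>) ^ 2"
      using ce_X[OF n] by eventually_elim simp
    show "(\<lambda>\<omega>'. (X (Suc n) \<omega>' - real_cond_exp M (F n) (X (Suc n)) \<omega>') ^ 2) \<in> borel_measurable M"
      using meas[of "Suc n"] by measurable
    show "(\<lambda>\<omega>. (X (Suc n) \<omega> - g n \<omega>) ^ 2) \<in> borel_measurable M"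
      using meas[of "Suc n"] g_meas[of n] by measurable
  qed
  then show ?thesis using ce_var[OF n] by eventually_elim simp
qed

end

lemma sum_split_first:
  assumes "n \<ge> 1"
  shows "(\<Sum>i\<in>{1..n}. f i) = f 1 + (\<Sum>k\<in>{1..<n}. f (Suc k))"
  using assms
proof (induction n)
  case 0 then show ?case by simp
next
  case (Suc n)
  show ?case
  proof (cases "n = 0")
    case True then show ?thesis by simp
  next
    case False
    then have "n \<ge> 1" by simp
    then show ?thesis using Suc.IH by (simp add: sum.atLeastLessThan_Suc add.assoc)
  qed
qed

context mdl begin

lemma orth_gen:
  assumes Y: "Y \<in> borel_measurable (F n)" "\<And>\<omega>. \<omega> \<in> space M \<Longrightarrow> \<bar>Y \<omega>\<bar> \<le> B"
    and f: "f \<in> borel_measurable M" "\<And>\<omega>. \<omega> \<in> space M \<Longrightarrow> \<bar>f \<omega>\<bar> \<le> Bf"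
    and e: "e \<in> borel_measurable (F n)" "\<And>\<omega>. \<omega> \<in> space M \<Longrightarrow> \<bar>e \<omega>\<bar> \<le> Be"
    and ce: "AE \<omega> in M. real_cond_exp M (F n) f \<omega> = e \<omega>"
  shows "(\<integral>\<omega>. Y \<omega> * (f \<omega> - e \<omega>) \<partial>M) = 0"
proof -
  interpret sigma_finite_subalgebra M "F n" by (rule sfs)
  have YM: "Y \<in> borel_measurable M" by (rule to_M[OF Y(1)])
  have eM: "e \<in> borel_measurable M" by (rule to_M[OF e(1)])
  have iYf: "integrable M (\<lambda>\<omega>. Y \<omega> * f \<omega>)"
  proof (rule intb[where B="B * Bf", OF fm])
    show "(\<lambda>\<omega>. Y \<omega> * f \<omega>) \<in> borel_measurable M" using YM f(1) by measurable
    fix \<omega> assume w: "\<omega> \<in> space M"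
    have "\<bar>Y \<omega>\<bar> * \<bar>f \<omega>\<bar> \<le> B * Bf" by (intro mult_mono Y(2) f(2) w) (use Y(2)[OF w] in auto)
    then show "\<bar>Y \<omega> * f \<omega>\<bar> \<le> B * Bf" by (simp add: abs_mult)
  qed
  have iYe: "integrable M (\<lambda>\<omega>. Y \<omega> * e \<omega>)"
  proof (rule intb[where B="B * Be", OF fm])
    show "(\<lambda>\<omega>. Y \<omega> * e \<omega>) \<in> borel_measurable M" using YM eM by measurable
    fix \<omega> assume w: "\<omega> \<in> space M"
    have "\<bar>Y \<omega>\<bar> * \<bar>e \<omega>\<bar> \<le> B * Be" by (intro mult_mono Y(2) e(2) w) (use Y(2)[OF w] in auto)
    then show "\<bar>Y \<omega> * e \<omega>\<bar> \<le> B * Be" by (simp add: abs_mult)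
  qed
  have "(\<integral>\<omega>. Y \<omega> * f \<omega> \<partial>M) = (\<integral>\<omega>. Y \<omega> * real_cond_exp M (F n) f \<omega> \<partial>M)"
    by (rule real_cond_exp_intg(2)[symmetric]) (use iYf Y(1) f(1) in auto)
  also have "\<dots> = (\<integral>\<omega>. Y \<omega> * e \<omega> \<partial>M)"
    by (rule integral_cong_AE) (use YM eM ce in auto)
  finally have eq: "(\<integral>\<omega>. Y \<omega> * f \<omega> \<partial>M) = (\<integral>\<omega>. Y \<omega> * e \<omega> \<partial>M)" .
  have "(\<integral>\<omega>. Y \<omega> * (f \<omega> - e \<omega>) \<partial>M) = (\<integral>\<omega>. Y \<omega> * f \<omega> - Y \<omega> * e \<omega> \<partial>M)"
    by (simp add: right_diff_distrib)
  also have "\<dots> = (\<integral>\<omega>. Y \<omega> * f \<omega> \<partial>M) - (\<integral>\<omega>. Y \<omega> * e \<omega> \<partial>M)"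
    by (rule Bochner_Integration.integral_diff[OF iYf iYe])
  finally show ?thesis using eq by simp
qed

end

context mdl begin

lemma slln_app:
  fixes Z :: "nat \<Rightarrow> 'a \<Rightarrow> real" and gg c :: real
  assumes ZM: "\<And>i. Z i \<in> borel_measurable M"
    and ZF: "\<And>i n. 1 \<le> i \<Longrightarrow> i \<le> n \<Longrightarrow> Z i \<in> borel_measurable (F n)"
    and Zb: "\<And>i \<omega>. i \<ge> 1 \<Longrightarrow> \<omega> \<in> space M \<Longrightarrow> \<bar>Z i \<omega>\<bar> \<le> 1"
    and ce: "\<And>n. n \<ge> 1 \<Longrightarrow> AE \<omega> in M. real_cond_exp M (F n) (Z (Suc n)) \<omega> = gg * (\<Sum>i\<in>{1..n}. Z i \<omega>) / real n + c"
    and gg: "\<bar>gg\<bar> < 1" and gc: "\<bar>gg\<bar> + \<bar>c\<bar> \<le> 1"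
  shows "AE \<omega> in M. (\<lambda>n. (\<Sum>i\<in>{1..n}. Z i \<omega>) / real n) \<longlonglongrightarrow> c / (1 - gg)"
proof -
  define Sm where "Sm n \<omega> = (\<Sum>i\<in>{1..n}. Z i \<omega>)" for n \<omega>
  define e where "e n \<omega> = gg * Sm n \<omega> / real n + c" for n \<omega>
  define D where "D k \<omega> = (if k \<ge> 1 then Z (Suc k) \<omega> - e k \<omega> else 0)" for k \<omega>
  have SmF: "Sm k \<in> borel_measurable (F n)" if "k \<le> n" for k n
  proof -
    have [measurable]: "Z i \<in> borel_measurable (F n)" if "i \<in> {1..k}" for i
      using ZF[of i n] that \<open>k \<le> n\<close> by auto
    show ?thesis unfolding Sm_def[abs_def] by (intro borel_measurable_sum) measurable
  qed
  have SmM: "Sm k \<in> borel_measurable M" for k by (rule to_M[OF SmF[of k k]]) simp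
  have Smb: "\<bar>Sm n \<omega>\<bar> \<le> real n" if "\<omega> \<in> space M" for n \<omega>
  proof -
    have "\<bar>Sm n \<omega>\<bar> \<le> (\<Sum>i\<in>{1..n}. \<bar>Z i \<omega>\<bar>)" unfolding Sm_def by (rule sum_abs)
    also have "\<dots> \<le> (\<Sum>i\<in>{1..n}. 1)" by (rule sum_mono) (use Zb that in auto)
    finally show ?thesis by simp
  qed
  have eF: "e k \<in> borel_measurable (F n)" if "k \<le> n" for k n
    unfolding e_def[abs_def] using SmF[OF that] by measurable
  have eb: "\<bar>e n \<omega>\<bar> \<le> 1" if "\<omega> \<in> space M" for n \<omega>
  proof -
    have "\<bar>Sm n \<omega> / real n\<bar> \<le> 1"
      using Smb[OF that, of n] by (cases "n = 0") (auto simp: divide_le_eq)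
    then have "\<bar>gg\<bar> * \<bar>Sm n \<omega> / real n\<bar> \<le> \<bar>gg\<bar> * 1" by (intro mult_left_mono) auto
    then have "\<bar>gg * Sm n \<omega> / real n\<bar> \<le> \<bar>gg\<bar>" by (simp add: abs_mult)
    then show ?thesis unfolding e_def using gc by linarith
  qed
  have DF: "D k \<in> borel_measurable (F n)" if "k < n" for k n
  proof (cases "k \<ge> 1")
    case True
    have "Z (Suc k) \<in> borel_measurable (F n)" by (rule ZF) (use that in auto)
    moreover have "e k \<in> borel_measurable (F n)" by (rule eF) (use that in auto)
    ultimately have "(\<lambda>\<omega>. Z (Suc k) \<omega> - e k \<omega>) \<in> borel_measurable (F n)" by measurable
    then show ?thesis unfolding D_def[abs_def] using True by simp
  next
    case False then show ?thesis unfolding D_def[abs_def] by simp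
  qed
  have DM: "D k \<in> borel_measurable M" for k by (rule to_M[OF DF[of k "Suc k"]]) simp
  have Db: "\<bar>D k \<omega>\<bar> \<le> 2" if "\<omega> \<in> space M" for k \<omega>
    using Zb[of "Suc k" \<omega>] eb[OF that, of k] that unfolding D_def by auto
  have TF: "(\<lambda>\<omega>. (\<Sum>k<n. D k \<omega>) ^ j) \<in> borel_measurable (F n)" for n j
  proof -
    have [measurable]: "D k \<in> borel_measurable (F n)" if "k \<in> {..<n}" for k using DF that by auto
    have "(\<lambda>\<omega>. \<Sum>k<n. D k \<omega>) \<in> borel_measurable (F n)" by (intro borel_measurable_sum) measurable
    then show ?thesis by measurable
  qed
  have Tb: "\<bar>(\<Sum>k<n. D k \<omega>) ^ j\<bar> \<le> (2 * real n) ^ j" if "\<omega> \<in> space M" for n j \<omega>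
  proof -
    have "\<bar>\<Sum>k<n. D k \<omega>\<bar> \<le> (\<Sum>k<n. \<bar>D k \<omega>\<bar>)" by (rule sum_abs)
    also have "\<dots> \<le> (\<Sum>k<n. 2)" by (rule sum_mono) (use Db that in auto)
    finally have "\<bar>\<Sum>k<n. D k \<omega>\<bar> \<le> 2 * real n" by simp
    then have "\<bar>\<Sum>k<n. D k \<omega>\<bar> ^ j \<le> (2 * real n) ^ j" by (intro power_mono) auto
    then show ?thesis by (simp add: power_abs)
  qed
  have orth: "(\<integral>\<omega>. (\<Sum>k<n. D k \<omega>) ^ j * D n \<omega> \<partial>M) = 0" for n j
  proof (cases "n \<ge> 1")
    case False then show ?thesis by (simp add: D_def)
  next
    case True
    have "(\<integral>\<omega>. (\<Sum>k<n. D k \<omega>) ^ j * D n \<omega> \<partial>M) = (\<integral>\<omega>. (\<Sum>k<n. D k \<omega>) ^ j * (Z (Suc n) \<omega> - e n \<omega>) \<partial>M)"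
      using True by (simp add: D_def)
    also have "\<dots> = 0"
    proof (rule orth_gen[where B="(2 * real n) ^ j" and Bf=1 and Be=1])
      show "(\<lambda>\<omega>. (\<Sum>k<n. D k \<omega>) ^ j) \<in> borel_measurable (F n)" by (rule TF)
      show "\<bar>(\<Sum>k<n. D k \<omega>) ^ j\<bar> \<le> (2 * real n) ^ j" if "\<omega> \<in> space M" for \<omega> using Tb that .
      show "Z (Suc n) \<in> borel_measurable M" by (rule ZM)
      show "\<bar>Z (Suc n) \<omega>\<bar> \<le> 1" if "\<omega> \<in> space M" for \<omega> using Zb that by simp
      show "e n \<in> borel_measurable (F n)" by (rule eF) simp
      show "\<bar>e n \<omega>\<bar> \<le> 1" if "\<omega> \<in> space M" for \<omega> using eb that .
      show "AE \<omega> in M. real_cond_exp M (F n) (Z (Suc n)) \<omega> = e n \<omega>"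
        using ce[OF True] unfolding e_def Sm_def .
    qed
    finally show ?thesis .
  qed
  have "AE \<omega> in M. (\<lambda>n. (\<Sum>k<n. D k \<omega>) / real n) \<longlonglongrightarrow> 0"
    by (rule slln_bounded[OF P DM Db]) (use orth[of _ 1] orth[of _ 3] in auto)
  then show ?thesis using AE_space
  proof eventually_elim
    case (elim \<omega>)
    define y where "y n = Sm n \<omega> / real n" for n
    define ee where "ee n = (Z 1 \<omega> + c * (real n - 1) + (\<Sum>k<n. D k \<omega>)) / real n" for n
    have rec: "y n = gg * (\<Sum>k\<in>{1..<n}. y k) / real n + ee n" if n: "n \<ge> 1" for n
    proof -
      have "Sm n \<omega> = Z 1 \<omega> + (\<Sum>k\<in>{1..<n}. Z (Suc k) \<omega>)"
        unfolding Sm_def by (rule sum_split_first[OF n])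
      also have "(\<Sum>k\<in>{1..<n}. Z (Suc k) \<omega>) = (\<Sum>k\<in>{1..<n}. gg * y k + c + D k \<omega>)"
        by (rule sum.cong) (auto simp: D_def e_def y_def)
      also have "\<dots> = gg * (\<Sum>k\<in>{1..<n}. y k) + c * (real n - 1) + (\<Sum>k\<in>{1..<n}. D k \<omega>)"
        using n by (simp add: sum.distrib sum_distrib_left of_nat_diff)
      also have "(\<Sum>k\<in>{1..<n}. D k \<omega>) = (\<Sum>k<n. D k \<omega>)"
      proof -
        have "(\<Sum>k<n. D k \<omega>) = (\<Sum>k\<in>{0..<n}. D k \<omega>)" by (simp add: atLeast0LessThan)
        also have "\<dots> = D 0 \<omega> + (\<Sum>k\<in>{1..<n}. D k \<omega>)" using n by (simp add: sum.atLeast_Suc_lessThan)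
        finally show ?thesis by (simp add: D_def)
      qed
      finally have "Sm n \<omega> = Z 1 \<omega> + (gg * (\<Sum>k\<in>{1..<n}. y k) + c * (real n - 1) + (\<Sum>k<n. D k \<omega>))" .
      then have "y n = (Z 1 \<omega> + (gg * (\<Sum>k\<in>{1..<n}. y k) + c * (real n - 1) + (\<Sum>k<n. D k \<omega>))) / real n"
        unfolding y_def by simp
      also have "\<dots> = gg * (\<Sum>k\<in>{1..<n}. y k) / real n + ee n"
        unfolding ee_def using n by (simp add: field_simps)
      finally show ?thesis .
    qed
    have yb: "\<bar>y n\<bar> \<le> 1" for n
      using Smb[OF elim(2), of n] unfolding y_def by (cases "n = 0") (auto simp: divide_le_eq)
    have "ee \<longlonglongrightarrow> 0 + c * 1 + 0"
    proof -
      have lim1: "(\<lambda>n. 1 / real n) \<longlonglongrightarrow> 0" by (rule lim_const_over_n)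
      have "(\<lambda>n. Z 1 \<omega> * (1 / real n) + c * (1 - 1 / real n) + (\<Sum>k<n. D k \<omega>) / real n) \<longlonglongrightarrow> Z 1 \<omega> * 0 + c * (1 - 0) + 0"
        by (intro tendsto_intros lim1 elim(1))
      moreover have "eventually (\<lambda>n. Z 1 \<omega> * (1 / real n) + c * (1 - 1 / real n) + (\<Sum>k<n. D k \<omega>) / real n = ee n) sequentially"
        using eventually_ge_at_top[of 1] by eventually_elim (auto simp: ee_def field_simps)
      ultimately show ?thesis using Lim_transform_eventually by force
    qed
    then have "y \<longlonglongrightarrow> c / (1 - gg)"
      by (intro det_limit[OF gg yb rec]) auto
    then show ?case unfolding y_def Sm_def .
  qed
qed

end

context mdl begin

lemma ga_lt: "\<bar>ga\<bar> < 1" and ga_r: "\<bar>ga\<bar> + \<bar>r\<bar> \<le> 1"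
proof -
  have pq: "0 \<le> p + q" "p + q \<le> 1" using pqr by auto
  have "ga \<le> p + q" using pq th by (simp add: mult_left_le)
  moreover have "ga \<ge> 0" using pq th by simp
  moreover have "ga < 1"
  proof (cases "p + q = 0")
    case True then show ?thesis by simp
  next
    case False
    then have "p + q > 0" using pq by simp
    then have "ga < (p + q) * 1" using th by (intro mult_strict_left_mono) auto
    then show ?thesis using pq by simp
  qed
  ultimately show "\<bar>ga\<bar> < 1" "\<bar>ga\<bar> + \<bar>r\<bar> \<le> 1" using pqr by auto
qed

lemma al_lt: "\<bar>al\<bar> < 1" and al_om: "\<bar>al\<bar> + \<bar>om\<bar> \<le> 1"
proof -
  have pq: "\<bar>p - q\<bar> \<le> 1" using pqr by auto
  have "\<bar>al\<bar> + \<bar>om\<bar> = \<bar>p - q\<bar> * \<theta> + \<bar>p - q\<bar> * (1 - \<theta>)" using th by (simp add: abs_mult)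
  also have "\<dots> = \<bar>p - q\<bar>" by (simp add: algebra_simps)
  finally show "\<bar>al\<bar> + \<bar>om\<bar> \<le> 1" using pq by simp
  have "\<bar>al\<bar> = \<bar>p - q\<bar> * \<theta>" using th by (simp add: abs_mult)
  also have "\<dots> \<le> 1 * \<theta>" using pq th by (intro mult_right_mono) auto
  finally show "\<bar>al\<bar> < 1" using th by simp
qed

lemma Ind_F:
  assumes "1 \<le> i" "i \<le> n"
  shows "Ind i c \<in> borel_measurable (F n)"
proof -
  have [measurable]: "X i \<in> borel_measurable (F n)" by (rule X_meas_nat_filt[OF assms])
  have "Ind i c = indicator {\<omega>\<in>space (F n). X i \<omega> = c}" unfolding Ind_def space_nat_filt ..
  also have "\<dots> \<in> borel_measurable (F n)" by measurable
  finally show ?thesis .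
qed

lemma cnt_Ind:
  assumes "\<omega> \<in> space M"
  shows "real (cnt X c n \<omega>) = (\<Sum>i\<in>{1..n}. Ind i c \<omega>)"
  unfolding real_cnt using assms by (intro sum.cong) (auto simp: Ind_def)

lemma lim_cnt0: "AE \<omega> in M. (\<lambda>n. real (cnt X 0 n \<omega>) / real n) \<longlonglongrightarrow> r / (1 - ga)"
proof -
  have "AE \<omega> in M. (\<lambda>n. (\<Sum>i\<in>{1..n}. Ind i 0 \<omega>) / real n) \<longlonglongrightarrow> r / (1 - ga)"
  proof (rule slln_app[OF Ind_meas Ind_F _ _ ga_lt ga_r])
    show "\<bar>Ind i 0 \<omega>\<bar> \<le> 1" for i \<omega> by (simp add: Ind_def indicator_def)
    fix n :: nat assume n: "n \<ge> 1"
    show "AE \<omega> in M. real_cond_exp M (F n) (Ind (Suc n) 0) \<omega> = ga * (\<Sum>i\<in>{1..n}. Ind i 0 \<omega>) / real n + r"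
      using step_zero[OF n] AE_space
    proof eventually_elim
      case (elim \<omega>)
      then show ?case unfolding Ind_def[of "Suc n"] cnt_Ind[OF elim(2), symmetric]
        by (simp add: mult.commute)
    qed
  qed auto
  then show ?thesis using AE_space by eventually_elim (simp add: cnt_Ind)
qed

lemma lim_S: "AE \<omega> in M. (\<lambda>n. partial_sum X n \<omega> / real n) \<longlonglongrightarrow> om / (1 - al)"
proof -
  have "AE \<omega> in M. (\<lambda>n. (\<Sum>i\<in>{1..n}. X i \<omega>) / real n) \<longlonglongrightarrow> om / (1 - al)"
  proof (rule slln_app[OF meas X_meas_nat_filt X_bound _ al_lt al_om])
    fix n :: nat assume n: "n \<ge> 1"
    show "AE \<omega> in M. real_cond_exp M (F n) (X (Suc n)) \<omega> = al * (\<Sum>i\<in>{1..n}. X i \<omega>) / real n + om"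
      using ce_X[OF n] unfolding g_def partial_sum_def .
  qed auto
  then show ?thesis unfolding partial_sum_def .
qed

definition phi where "phi = ta / (1 - ga) - (om / (1 - al))^2"

lemma lim_h: "AE \<omega> in M. (\<lambda>n. h n \<omega>) \<longlonglongrightarrow> phi"
  using lim_cnt0 lim_S
proof eventually_elim
  case (elim \<omega>)
  have "(\<lambda>n. ga * (1 - real (cnt X 0 n \<omega>) / real n) + ta - (al * (partial_sum X n \<omega> / real n) + om)^2)
     \<longlonglongrightarrow> ga * (1 - r / (1 - ga)) + ta - (al * (om / (1 - al)) + om)^2"
    by (intro tendsto_intros elim)
  moreover have "ga * (1 - r / (1 - ga)) + ta - (al * (om / (1 - al)) + om)^2 = phi"
  proof -
    have g1: "1 - ga \<noteq> 0" using ga_lt by auto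
    have a1: "1 - al \<noteq> 0" using al_lt by auto
    have t: "ta = 1 - r - ga" using pqr by (simp add: algebra_simps)
    have "ga * (1 - r / (1 - ga)) + ta = ta / (1 - ga)"
      using g1 unfolding t by (simp add: field_simps)
    moreover have "al * (om / (1 - al)) + om = om / (1 - al)"
      using a1 by (simp add: field_simps)
    ultimately show ?thesis unfolding phi_def by simp
  qed
  ultimately show ?case unfolding h_def g_def by (simp add: times_divide_eq_right)
qed

lemma part1: "AE \<omega> in M. (\<lambda>n. real_cond_exp M (F n)
              (\<lambda>\<omega>'. (X (Suc n) \<omega>' - real_cond_exp M (F n) (X (Suc n)) \<omega>')^2) \<omega>) \<longlonglongrightarrow> phi"
proof -
  have "AE \<omega> in M. \<forall>n. n \<ge> 1 \<longrightarrow> real_cond_exp M (F n)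
              (\<lambda>\<omega>'. (X (Suc n) \<omega>' - real_cond_exp M (F n) (X (Suc n)) \<omega>')^2) \<omega> = h n \<omega>"
    unfolding AE_all_countable using ce_var' by (auto intro: AE_mp)
  then show ?thesis using lim_h
  proof eventually_elim
    case (elim \<omega>)
    have "eventually (\<lambda>n. h n \<omega> = real_cond_exp M (F n)
              (\<lambda>\<omega>'. (X (Suc n) \<omega>' - real_cond_exp M (F n) (X (Suc n)) \<omega>')^2) \<omega>) sequentially"
      using eventually_ge_at_top[of 1] by eventually_elim (use elim(1) in auto)
    then show ?case using elim(2) by (rule Lim_transform_eventually[rotated])
  qed
qed

end

context mdl begin

lemma ps_Suc: "partial_sum X (Suc k) \<omega> = partial_sum X k \<omega> + X (Suc k) \<omega>"
  unfolding partial_sum_def by simp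

lemma ps_int: "integrable M (partial_sum X k)"
  by (rule intb[where B="real k", OF fm psum_meas]) (rule psum_bound)

lemma X_int: "k \<ge> 1 \<Longrightarrow> integrable M (X k)"
  by (rule intb[where B=1, OF fm meas]) (rule X_bound)

lemma ES_rec:
  assumes k: "k \<ge> 1"
  shows "(\<integral>\<omega>. partial_sum X (Suc k) \<omega> \<partial>M) = (1 + al / real k) * (\<integral>\<omega>. partial_sum X k \<omega> \<partial>M) + om"
proof -
  interpret sigma_finite_subalgebra M "F k" by (rule sfs)
  interpret prob_space M by (rule P)
  have XI: "integrable M (X (Suc k))" by (rule X_int) simp
  have "(\<integral>\<omega>. partial_sum X (Suc k) \<omega> \<partial>M) = (\<integral>\<omega>. partial_sum X k \<omega> + X (Suc k) \<omega> \<partial>M)"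
    by (simp add: ps_Suc)
  also have "\<dots> = (\<integral>\<omega>. partial_sum X k \<omega> \<partial>M) + (\<integral>\<omega>. X (Suc k) \<omega> \<partial>M)"
    by (rule Bochner_Integration.integral_add[OF ps_int XI])
  also have "(\<integral>\<omega>. X (Suc k) \<omega> \<partial>M) = (\<integral>\<omega>. real_cond_exp M (F k) (X (Suc k)) \<omega> \<partial>M)"
    by (rule real_cond_exp_int(2)[OF XI, symmetric])
  also have "\<dots> = (\<integral>\<omega>. (al / real k) * partial_sum X k \<omega> + om \<partial>M)"
  proof (rule integral_cong_AE)
    show "AE \<omega> in M. real_cond_exp M (F k) (X (Suc k)) \<omega> = (al / real k) * partial_sum X k \<omega> + om"
      using ce_X[OF k] by eventually_elim (simp add: g_def)
  qed (use psum_meas in auto)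
  also have "\<dots> = (al / real k) * (\<integral>\<omega>. partial_sum X k \<omega> \<partial>M) + om"
    using ps_int by (simp add: prob_space)
  finally show ?thesis by (simp add: algebra_simps)
qed

lemma mart_diff:
  assumes k: "k \<ge> 1" and a: "al \<ge> 0" and w: "\<omega> \<in> space M"
  shows "mart M X al (Suc k) \<omega> - mart M X al k \<omega> = (X (Suc k) \<omega> - g k \<omega>) / a_seq al (Suc k)"
proof -
  define E where "E = (\<integral>\<omega>. partial_sum X k \<omega> \<partial>M)"
  define A where "A = a_seq al k"
  have A: "A > 0" unfolding A_def by (rule a_pos[OF a])
  have f: "1 + al / real k > 0" using a k by (simp add: add_pos_nonneg)
  have AS: "a_seq al (Suc k) = A * (1 + al / real k)" unfolding A_def by (rule a_Suc[OF k])
  have m1: "mart M X al (Suc k) \<omega> = (partial_sum X k \<omega> + X (Suc k) \<omega> - ((1 + al / real k) * E + om)) / (A * (1 + al / real k))"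
  proof -
    have "mart M X al (Suc k) \<omega> = (partial_sum X (Suc k) \<omega> - (\<integral>\<omega>. partial_sum X (Suc k) \<omega> \<partial>M)) / a_seq al (Suc k)"
      unfolding mart_def by simp
    also have "\<dots> = (partial_sum X k \<omega> + X (Suc k) \<omega> - ((1 + al / real k) * E + om)) / (A * (1 + al / real k))"
      unfolding ES_rec[OF k] unfolding E_def AS ps_Suc ..
    finally show ?thesis .
  qed
  have m2: "mart M X al k \<omega> = (partial_sum X k \<omega> - E) / A"
    unfolding mart_def using k by (simp add: E_def A_def)
  have kk: "real k > 0" using k by simp
  have alg: "(s + x - (f * E + cc)) / (A * f) - (s - E) / A = (x - ((f - 1) * s + cc)) / (A * f)"
    if "A > 0" "f > 0" for s x E cc A f :: real
    using that by (simp add: field_simps)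
  have gk: "g k \<omega> = ((1 + al / real k) - 1) * partial_sum X k \<omega> + om"
    unfolding g_def by simp
  show ?thesis unfolding m1 m2 AS gk by (rule alg[OF A f])
qed

lemma mart_meas: "mart M X al n \<in> borel_measurable M"
proof -
  have [measurable]: "partial_sum X n \<in> borel_measurable M" by (rule psum_meas)
  show ?thesis unfolding mart_def[abs_def] by measurable
qed

lemma Q_ae:
  assumes k: "k \<ge> 1" and a: "al \<ge> 0"
  shows "AE \<omega> in M. real_cond_exp M (F k) (\<lambda>\<omega>'. (mart M X al (Suc k) \<omega>' - mart M X al k \<omega>')^2) \<omega>
     = h k \<omega> / (a_seq al (Suc k))^2"
proof -
  interpret sigma_finite_subalgebra M "F k" by (rule sfs)
  define A where "A = (a_seq al (Suc k))^2"
  have Xm: "X (Suc k) \<in> borel_measurable M" by (rule meas)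
  have gm: "g k \<in> borel_measurable M" by (rule g_meas)
  have [measurable]: "mart M X al n \<in> borel_measurable M" for n by (rule mart_meas)
  have iv: "integrable M (\<lambda>\<omega>. (X (Suc k) \<omega> - g k \<omega>)^2)"
  proof (rule intb[where B="(1 + (\<bar>al\<bar> + \<bar>om\<bar>))^2", OF fm])
    show "(\<lambda>\<omega>. (X (Suc k) \<omega> - g k \<omega>)^2) \<in> borel_measurable M" using Xm gm by measurable
    fix \<omega> assume w: "\<omega> \<in> space M"
    have "\<bar>X (Suc k) \<omega> - g k \<omega>\<bar> \<le> 1 + (\<bar>al\<bar> + \<bar>om\<bar>)"
      using X_bound[OF w, of "Suc k"] g_bound[OF w, of k] by linarith
    then have "\<bar>X (Suc k) \<omega> - g k \<omega>\<bar>^2 \<le> (1 + (\<bar>al\<bar> + \<bar>om\<bar>))^2" by (intro power_mono) auto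
    then show "\<bar>(X (Suc k) \<omega> - g k \<omega>)^2\<bar> \<le> (1 + (\<bar>al\<bar> + \<bar>om\<bar>))^2" by (simp add: power_abs)
  qed
  have 1: "AE \<omega> in M. real_cond_exp M (F k) (\<lambda>\<omega>'. (mart M X al (Suc k) \<omega>' - mart M X al k \<omega>')^2) \<omega>
     = real_cond_exp M (F k) (\<lambda>\<omega>. (X (Suc k) \<omega> - g k \<omega>)^2 / A) \<omega>"
  proof (rule real_cond_exp_cong)
    show "AE \<omega> in M. (mart M X al (Suc k) \<omega> - mart M X al k \<omega>)^2 = (X (Suc k) \<omega> - g k \<omega>)^2 / A"
      using AE_space by eventually_elim (simp add: mart_diff[OF k a] A_def power_divide)
    show "(\<lambda>\<omega>. (X (Suc k) \<omega> - g k \<omega>)^2 / A) \<in> borel_measurable M" using Xm gm by measurable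
  qed measurable
  have 2: "AE \<omega> in M. real_cond_exp M (F k) (\<lambda>\<omega>. (X (Suc k) \<omega> - g k \<omega>)^2 / A) \<omega>
     = real_cond_exp M (F k) (\<lambda>\<omega>. (X (Suc k) \<omega> - g k \<omega>)^2) \<omega> / A"
    by (rule real_cond_exp_cdiv[OF iv])
  show ?thesis using 1 2 ce_var[OF k] by eventually_elim (simp add: A_def)
qed

lemma part2:
  assumes a: "al \<ge> 0" "al \<le> 1/2"
  shows "AE \<omega> in M. (\<lambda>n. qvar M X al n \<omega> / (\<Sum>k\<in>{1..n}. 1 / (a_seq al k)^2)) \<longlonglongrightarrow> phi"
proof -
  have "AE \<omega> in M. \<forall>k. k \<ge> 1 \<longrightarrow> real_cond_exp M (F k) (\<lambda>\<omega>'. (mart M X al (Suc k) \<omega>' - mart M X al k \<omega>')^2) \<omega>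
     = h k \<omega> / (a_seq al (Suc k))^2"
    unfolding AE_all_countable using Q_ae[OF _ a(1)] by (auto intro: AE_mp)
  then show ?thesis using lim_h
  proof eventually_elim
    case (elim \<omega>)
    define Q where "Q j = real_cond_exp M (F (j - 1)) (\<lambda>\<omega>'. (mart M X al j \<omega>' - mart M X al (j - 1) \<omega>')^2) \<omega>" for j
    define w where "w j = 1 / (a_seq al j)^2" for j
    define u where "u j = Q j * (a_seq al j)^2" for j
    have apos: "a_seq al j > 0" for j by (rule a_pos[OF a(1)])
    have wu: "w j * u j = Q j" for j unfolding w_def u_def using apos[of j] by simp
    have qv: "qvar M X al n \<omega> = (\<Sum>j\<in>{1..n}. w j * u j)" for n
      unfolding qvar_def wu Q_def ..
    have "(\<lambda>j. u (Suc j)) \<longlonglongrightarrow> phi"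
    proof -
      have "eventually (\<lambda>j. h j \<omega> = u (Suc j)) sequentially"
        using eventually_ge_at_top[of 1]
      proof eventually_elim
        case (elim j)
        then show ?case using \<open>\<forall>k. k \<ge> 1 \<longrightarrow> _\<close> apos[of "Suc j"] unfolding u_def Q_def by simp
      qed
      then show ?thesis using elim(2) by (rule Lim_transform_eventually[rotated])
    qed
    then have ul: "u \<longlonglongrightarrow> phi" by (rule LIMSEQ_imp_Suc)
    have "(\<lambda>n. (\<Sum>j\<in>{1..n}. w j * u j) / (\<Sum>j\<in>{1..n}. w j)) \<longlonglongrightarrow> phi"
    proof (rule toeplitz[OF _ _ ul])
      show "0 \<le> w k" for k unfolding w_def by simp
      show "filterlim (\<lambda>n. \<Sum>k\<in>{1..n}. w k) at_top sequentially"
        unfolding w_def by (rule v_div[OF a])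
    qed
    then show ?case unfolding qv w_def .
  qed
qed

end

theorem mainTheorem12:
  fixes M :: "'a measure" and X :: "nat \<Rightarrow> 'a \<Rightarrow> real"
    and p q r \<theta> :: real
  assumes P: "prob_space M"
    and pqr: "p \<ge> 0" "q \<ge> 0" "r \<ge> 0" "p + q + r = 1"
    and th: "0 \<le> \<theta>" "\<theta> < 1"
    and meas: "\<And>i. X i \<in> borel_measurable M"
    and vals: "\<And>i \<omega>. i \<ge> 1 \<Longrightarrow> \<omega> \<in> space M \<Longrightarrow> X i \<omega> \<in> {-1, 0, 1}"
    and init: "measure M {\<omega>\<in>space M. X 1 \<omega> = 1} = p"
              "measure M {\<omega>\<in>space M. X 1 \<omega> = -1} = q"
              "measure M {\<omega>\<in>space M. X 1 \<omega> = 0} = r"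
    and step_plus: "\<And>n. n \<ge> 1 \<Longrightarrow> AE \<omega> in M.
       real_cond_exp M (nat_filt M X n) (indicator {\<omega>\<in>space M. X (Suc n) \<omega> = 1}) \<omega>
       = \<theta> * (real (cnt X 1 n \<omega>) / real n * p + real (cnt X (-1) n \<omega>) / real n * q) + (1 - \<theta>) * p"
    and step_minus: "\<And>n. n \<ge> 1 \<Longrightarrow> AE \<omega> in M.
       real_cond_exp M (nat_filt M X n) (indicator {\<omega>\<in>space M. X (Suc n) \<omega> = -1}) \<omega>
       = \<theta> * (real (cnt X (-1) n \<omega>) / real n * p + real (cnt X 1 n \<omega>) / real n * q) + (1 - \<theta>) * q"
    and step_zero: "\<And>n. n \<ge> 1 \<Longrightarrow> AE \<omega> in M.
       real_cond_exp M (nat_filt M X n) (indicator {\<omega>\<in>space M. X (Suc n) \<omega> = 0}) \<omega>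
       = \<theta> * (p + q) * (real (cnt X 0 n \<omega>) / real n) + r"
    and alpha: "0 \<le> (p - q) * \<theta>"
  shows "(let \<alpha> = (p - q) * \<theta>; \<omega>\<^sub>0 = (p - q) * (1 - \<theta>); \<tau> = (1 - \<theta>) * (p + q);
              \<gamma> = (p + q) * \<theta>; \<phi> = \<tau> / (1 - \<gamma>) - (\<omega>\<^sub>0 / (1 - \<alpha>))^2 in
          (AE \<omega> in M. (\<lambda>n. real_cond_exp M (nat_filt M X n)
              (\<lambda>\<omega>'. (X (Suc n) \<omega>' - real_cond_exp M (nat_filt M X n) (X (Suc n)) \<omega>')^2) \<omega>)
             \<longlonglongrightarrow> \<phi>)
          \<and> (\<alpha> \<le> 1/2 \<longrightarrow>
             (AE \<omega> in M. (\<lambda>n. qvar M X \<alpha> n \<omega> / (\<Sum>k\<in>{1..n}. 1 / (a_seq \<alpha> k)^2))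
               \<longlonglongrightarrow> \<phi>)))"
  proof -
  interpret mdl M X p q r \<theta>
    by (rule mdl.intro[OF P pqr th meas vals step_plus step_minus step_zero])
  have 1: "AE \<omega> in M. (\<lambda>n. real_cond_exp M (F n)
              (\<lambda>\<omega>'. (X (Suc n) \<omega>' - real_cond_exp M (F n) (X (Suc n)) \<omega>')^2) \<omega>) \<longlonglongrightarrow> phi"
    by (rule part1)
  have 2: "al \<le> 1/2 \<longrightarrow> (AE \<omega> in M. (\<lambda>n. qvar M X al n \<omega> / (\<Sum>k\<in>{1..n}. 1 / (a_seq al k)^2)) \<longlonglongrightarrow> phi)"
    using part2[OF alpha] by blast
  show ?thesis unfolding Let_def phi_def[symmetric] using 1 2 by (rule conjI)
qed

end
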